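(* Let $S\subset\mathcal P$ be a rectangular lattice. Then every bounded region of the line pattern $\mathcal L_S$ is a polygon with at most $4$ sides (i.e. a triangle or a quadrilateral).
   Context: $\mathcal P=\mathbb{R}^2\setminus\{(0,0)\}$; for $P=(A,B)\in\mathcal P$, $L_P$ is the line $Ax+By=1$ in $\mathbb{R}^2$; $\mathcal L_S=\{L_P\mid P\in S\}$. A rectangular lattice is a set of the form $S=\{(a+k\delta_x,\,b+j\delta_y)\mid k,j\in\mathbb{Z},\ 0\le k\le N,\ 0\le j\le M\}\setminus\{(0,0)\}$, where $(a,b)\ne(0,0)$, $\delta_x,\delta_y>0$, $N,M\in\mathbb{Z}_{\ge0}$, and the corners $(a,b+M\delta_y)$, $(a+N\delta_x,b)$, $(a+N\delta_x,b+M\delta_y)$ are all different from $(0,0)$. The regions of $\mathcal L_S$ are the closures of the connected components of $\mathbb{R}^2\setminus\bigcup_{P\in S}L_P$. *)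

theory Defs
  imports "HOL-Analysis.Analysis"
begin

definition line_of :: "real \<times> real \<Rightarrow> (real \<times> real) set" where
  "line_of P = {(x, y). fst P * x + snd P * y = 1}"

definition rect_lattice_set ::
  "real \<Rightarrow> real \<Rightarrow> real \<Rightarrow> real \<Rightarrow> nat \<Rightarrow> nat \<Rightarrow> (real \<times> real) set" where
  "rect_lattice_set a b dx dy N M =
     {(a + real k * dx, b + real j * dy) | k j. k \<le> N \<and> j \<le> M} - {(0, 0)}"

definition is_rectangular_lattice :: "(real \<times> real) set \<Rightarrow> bool" where
  "is_rectangular_lattice S \<longleftrightarrow>
     (\<exists>a b dx dy N M. (a, b) \<noteq> (0, 0) \<and> dx > 0 \<and> dy > 0 \<and>
        (a, b + real M * dy) \<noteq> (0, 0) \<and> (a + real N * dx, b) \<noteq> (0, 0) \<and>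
        (a + real N * dx, b + real M * dy) \<noteq> (0, 0) \<and>
        S = rect_lattice_set a b dx dy N M)"

definition regions :: "(real \<times> real) set \<Rightarrow> (real \<times> real) set set" where
  "regions S = closure ` components (UNIV - (\<Union>P\<in>S. line_of P))"

end

theory Submission
  imports Defs
begin


definition aff :: "real \<Rightarrow> real \<Rightarrow> real \<Rightarrow> int \<times> int \<Rightarrow> real" where
  "aff u v w p = u * of_int (fst p) + v * of_int (snd p) + w"

definition ibox :: "int \<Rightarrow> int \<Rightarrow> (int \<times> int) set" where
  "ibox N M = {p. 0 \<le> fst p \<and> fst p \<le> N \<and> 0 \<le> snd p \<and> snd p \<le> M}"

lemma ibox_sub: "ibox N M \<subseteq> {0..N} \<times> {0..M}"
  by (auto simp: ibox_def)

lemma finite_ibox: "finite (ibox N M)"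
  by (rule finite_subset[OF ibox_sub]) auto

lemma mem_ibox: "(k, j) \<in> ibox N M \<longleftrightarrow> 0 \<le> k \<and> k \<le> N \<and> 0 \<le> j \<and> j \<le> M"
  by (simp add: ibox_def)

lemma aff_kj: "aff u v w (k, j) = u * of_int k + v * of_int j + w"
  by (simp add: aff_def)

lemma int_final:
  fixes kl jl kf jf m1 n1 m2 n2 N M :: int
  assumes pos: "m1 > 0" "n1 > 0" "m2 > 0" "n2 > 0"
    and ex1: "kl + m1 > N \<or> jl - n1 < 0"
    and ex2: "kf - m2 < 0 \<or> jf + n2 > M"
    and b1: "kl - m1 \<ge> 0" "jl + n1 \<le> M"
    and b2: "kf + m2 \<le> N" "jf - n2 \<ge> 0"
    and ord: "kl \<le> kf" "jf \<le> jl"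
    and steep: "n1 * m2 > n2 * m1"
    and dlt: "(n1 - 1) * m2 < n2 * m1"
  shows False
proof -
  consider "kl + m1 > N" "kf - m2 < 0" | "kl + m1 > N" "jf + n2 > M"
    | "jl - n1 < 0" "kf - m2 < 0" | "jl - n1 < 0" "jf + n2 > M"
    using ex1 ex2 by blast
  then show False
  proof cases
    case 1 then show ?thesis using b1 b2 ord by linarith
  next
    case 4 then show ?thesis using b1 b2 ord by linarith
  next
    case 2
    then have "m2 < m1" "n1 < n2" using b1 b2 ord by linarith+
    then have "n1 * m2 < n1 * m1" using pos by simp
    also have "\<dots> < n2 * m1" using \<open>n1 < n2\<close> pos by simp
    finally show ?thesis using steep by linarith
  next
    case 3
    then have "m1 \<le> m2 - 1" "n2 \<le> n1 - 1" using b1 b2 ord by linarith+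
    then have "n2 * m1 \<le> (n1 - 1) * m1" using pos by (simp add: mult_right_mono)
    also have "\<dots> \<le> (n1 - 1) * m2" using \<open>m1 \<le> m2 - 1\<close> \<open>n2 \<le> n1 - 1\<close> pos
      by (intro mult_left_mono) auto
    finally show ?thesis using dlt by linarith
  qed
qed

lemma mono_case:
  fixes u1 v1 w1 u2 v2 w2 :: real and N M :: int
  assumes pos: "u1 > 0" "v1 > 0" "u2 > 0" "v2 > 0"
    and same: "\<forall>p\<in>ibox N M. (aff u1 v1 w1 p \<ge> 0) = (aff u2 v2 w2 p \<ge> 0)"
    and z1: "p1 \<in> ibox N M" "q1 \<in> ibox N M" "p1 \<noteq> q1" "aff u1 v1 w1 p1 = 0" "aff u1 v1 w1 q1 = 0"
    and z2: "p2 \<in> ibox N M" "q2 \<in> ibox N M" "p2 \<noteq> q2" "aff u2 v2 w2 p2 = 0" "aff u2 v2 w2 q2 = 0"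
    and steep: "u1 * v2 > u2 * v1"
  shows False
proof -
  define T1 where "T1 = {p \<in> ibox N M. aff u1 v1 w1 p = 0}"
  define T2 where "T2 = {p \<in> ibox N M. aff u2 v2 w2 p = 0}"
  have fin1: "finite T1" and fin2: "finite T2"
    unfolding T1_def T2_def using finite_ibox by auto
  have "p1 \<in> T1" "q1 \<in> T1" "p2 \<in> T2" "q2 \<in> T2" using z1 z2 by (auto simp: T1_def T2_def)
  define mx where "mx = Max (fst ` T1)"
  have "mx \<in> fst ` T1" unfolding mx_def using fin1 \<open>p1 \<in> T1\<close> by (intro Max_in) auto
  then obtain tl where tl: "tl \<in> T1" "fst tl = mx" by auto
  have tlmax: "\<And>p. p \<in> T1 \<Longrightarrow> fst p \<le> fst tl" using fin1 tl(2) mx_def by auto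
  obtain t' where t': "t' \<in> T1" "t' \<noteq> tl"
    using \<open>p1 \<in> T1\<close> \<open>q1 \<in> T1\<close> z1(3) by metis
  define mn where "mn = Min (fst ` T2)"
  have "mn \<in> fst ` T2" unfolding mn_def using fin2 \<open>p2 \<in> T2\<close> by (intro Min_in) auto
  then obtain tf where tf: "tf \<in> T2" "fst tf = mn" by auto
  have tfmin: "\<And>p. p \<in> T2 \<Longrightarrow> fst tf \<le> fst p" using fin2 tf(2) mn_def by auto
  obtain t'' where t'': "t'' \<in> T2" "t'' \<noteq> tf"
    using \<open>p2 \<in> T2\<close> \<open>q2 \<in> T2\<close> z2(3) by metis
  obtain kl jl where tlkj: "tl = (kl, jl)" by (cases tl)
  obtain k' j' where t'kj: "t' = (k', j')" by (cases t')
  obtain kf jf where tfkj: "tf = (kf, jf)" by (cases tf)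
  obtain k'' j'' where t''kj: "t'' = (k'', j'')" by (cases t'')
  note defs = T1_def T2_def tlkj t'kj tfkj t''kj aff_kj mem_ibox
  have f1tl: "u1 * of_int kl + v1 * of_int jl + w1 = 0" and tlb: "(kl, jl) \<in> ibox N M"
    using tl(1) by (auto simp: defs)
  have f1t': "u1 * of_int k' + v1 * of_int j' + w1 = 0" and t'b: "(k', j') \<in> ibox N M"
    using t'(1) by (auto simp: defs)
  have f2tf: "u2 * of_int kf + v2 * of_int jf + w2 = 0" and tfb: "(kf, jf) \<in> ibox N M"
    using tf(1) by (auto simp: defs)
  have f2t'': "u2 * of_int k'' + v2 * of_int j'' + w2 = 0" and t''b: "(k'', j'') \<in> ibox N M"
    using t''(1) by (auto simp: defs)
  define m1 where "m1 = kl - k'"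
  define n1 where "n1 = j' - jl"
  define m2 where "m2 = k'' - kf"
  define n2 where "n2 = jf - j''"
  have e1: "u1 * of_int m1 = v1 * of_int n1"
    using f1tl f1t' unfolding m1_def n1_def by (simp add: algebra_simps)
  have e2: "u2 * of_int m2 = v2 * of_int n2"
    using f2tf f2t'' unfolding m2_def n2_def by (simp add: algebra_simps)
  have "k' \<le> kl" using tlmax[OF t'(1)] by (simp add: tlkj t'kj)
  have "k' \<noteq> kl"
  proof
    assume "k' = kl"
    then have "v1 * of_int n1 = 0" using e1 by (simp add: m1_def)
    then have "n1 = 0" using pos by simp
    then show False using t'(2) \<open>k' = kl\<close> by (simp add: tlkj t'kj n1_def)
  qed
  then have m1p: "m1 > 0" using \<open>k' \<le> kl\<close> by (simp add: m1_def)
  have n1p: "n1 > 0"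
  proof -
    have "v1 * of_int n1 > 0" using e1[symmetric] pos m1p by simp
    then show ?thesis using pos by (simp add: zero_less_mult_iff)
  qed
  have "kf \<le> k''" using tfmin[OF t''(1)] by (simp add: tfkj t''kj)
  have "k'' \<noteq> kf"
  proof
    assume "k'' = kf"
    then have "v2 * of_int n2 = 0" using e2 by (simp add: m2_def)
    then have "n2 = 0" using pos by simp
    then show False using t''(2) \<open>k'' = kf\<close> by (simp add: tfkj t''kj n2_def)
  qed
  then have m2p: "m2 > 0" using \<open>kf \<le> k''\<close> by (simp add: m2_def)
  have n2p: "n2 > 0"
  proof -
    have "v2 * of_int n2 > 0" using e2[symmetric] pos m2p by simp
    then show ?thesis using pos by (simp add: zero_less_mult_iff)
  qed
  have ex1: "kl + m1 > N \<or> jl - n1 < 0"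
  proof (rule ccontr)
    assume "\<not> ?thesis"
    then have rb: "(kl + m1, jl - n1) \<in> ibox N M" using tlb m1p n1p by (auto simp: mem_ibox)
    have "aff u1 v1 w1 (kl + m1, jl - n1) = (u1 * of_int kl + v1 * of_int jl + w1) + (u1 * of_int m1 - v1 * of_int n1)"
      by (simp add: aff_kj algebra_simps)
    also have "\<dots> = 0" using f1tl e1 by simp
    finally have "(kl + m1, jl - n1) \<in> T1" using rb by (simp add: T1_def)
    from tlmax[OF this] show False using m1p by (simp add: tlkj)
  qed
  have ex2: "kf - m2 < 0 \<or> jf + n2 > M"
  proof (rule ccontr)
    assume "\<not> ?thesis"
    then have rb: "(kf - m2, jf + n2) \<in> ibox N M" using tfb m2p n2p by (auto simp: mem_ibox)
    have "aff u2 v2 w2 (kf - m2, jf + n2) = (u2 * of_int kf + v2 * of_int jf + w2) - (u2 * of_int m2 - v2 * of_int n2)"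
      by (simp add: aff_kj algebra_simps)
    also have "\<dots> = 0" using f2tf e2 by simp
    finally have "(kf - m2, jf + n2) \<in> T2" using rb by (simp add: T2_def)
    from tfmin[OF this] show False using m2p by (simp add: tfkj)
  qed
  have b1: "kl - m1 \<ge> 0" "jl + n1 \<le> M" using t'b by (auto simp: mem_ibox m1_def n1_def)
  have b2: "kf + m2 \<le> N" "jf - n2 \<ge> 0" using t''b by (auto simp: mem_ibox m2_def n2_def)
  have g1: "aff u1 v1 w1 (kf, jf) \<ge> 0" using same tfb f2tf by (auto simp: aff_kj)
  have g2: "aff u2 v2 w2 (kl, jl) \<ge> 0" using same tlb f1tl by (auto simp: aff_kj)
  define A where "A = real_of_int (kf - kl)"
  define B where "B = real_of_int (jl - jf)"
  have h1: "u1 * A - v1 * B \<ge> 0"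
  proof -
    have "u1 * A - v1 * B = aff u1 v1 w1 (kf, jf) - (u1 * of_int kl + v1 * of_int jl + w1)"
      by (simp add: A_def B_def aff_kj algebra_simps)
    then show ?thesis using g1 f1tl by simp
  qed
  have h2: "v2 * B - u2 * A \<ge> 0"
  proof -
    have "v2 * B - u2 * A = aff u2 v2 w2 (kl, jl) - (u2 * of_int kf + v2 * of_int jf + w2)"
      by (simp add: A_def B_def aff_kj algebra_simps)
    then show ?thesis using g2 f2tf by simp
  qed
  have A0: "A \<ge> 0"
  proof (rule ccontr)
    assume "\<not> A \<ge> 0"
    then have An: "A < 0" by simp
    have "(u1 * v2 - u2 * v1) * A = v2 * (u1 * A - v1 * B) + v1 * (v2 * B - u2 * A)"
      by (simp add: algebra_simps)
    also have "\<dots> \<ge> 0" using h1 h2 pos by (simp add: add_nonneg_nonneg)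
    finally have "(u1 * v2 - u2 * v1) * A \<ge> 0" .
    moreover have "(u1 * v2 - u2 * v1) * A < 0" using steep An by (simp add: mult_pos_neg)
    ultimately show False by simp
  qed
  have B0: "B \<ge> 0"
  proof -
    have "v2 * B \<ge> 0" using h2 A0 pos by (smt (verit) mult_nonneg_nonneg)
    then show ?thesis using pos by (simp add: zero_le_mult_iff)
  qed
  have ord: "kl \<le> kf" "jf \<le> jl" using A0 B0 by (simp_all add: A_def B_def)
  have steepi: "n1 * m2 > n2 * m1"
  proof -
    have "(u1 * v2 - u2 * v1) * (of_int m1 * of_int m2) > 0"
      using steep m1p m2p by simp
    also have "(u1 * v2 - u2 * v1) * (of_int m1 * of_int m2)
        = v2 * of_int m2 * (u1 * of_int m1) - v1 * of_int m1 * (u2 * of_int m2)"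
      by (simp add: algebra_simps)
    also have "\<dots> = (v1 * v2) * (of_int n1 * of_int m2 - of_int n2 * of_int m1)"
      using e1 e2 by (simp add: algebra_simps)
    finally have "(v1 * v2) * (of_int n1 * of_int m2 - of_int n2 * of_int m1) > 0" .
    moreover have "v1 * v2 > 0" using pos by simp
    ultimately have "of_int n1 * of_int m2 - of_int n2 * of_int m1 > (0::real)"
      using zero_less_mult_pos by blast
    then have "real_of_int (n1 * m2 - n2 * m1) > 0" by simp
    then show ?thesis by linarith
  qed
  have dlt: "(n1 - 1) * m2 < n2 * m1"
  proof -
    have sb: "(k', j' - 1) \<in> ibox N M" using t'b n1p tlb by (auto simp: mem_ibox n1_def)
    have "aff u1 v1 w1 (k', j' - 1) = -v1" using f1t' by (simp add: aff_kj algebra_simps)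
    then have "\<not> aff u1 v1 w1 (k', j' - 1) \<ge> 0" using pos by simp
    then have "aff u2 v2 w2 (k', j' - 1) < 0" using same sb by auto
    moreover have "aff u2 v2 w2 (k', j' - 1) = aff u2 v2 w2 (kl, jl) + (v2 * (of_int n1 - 1) - u2 * of_int m1)"
      by (simp add: aff_kj m1_def n1_def algebra_simps)
    ultimately have "v2 * (of_int n1 - 1) - u2 * of_int m1 < 0" using g2 by simp
    then have "(v2 * (of_int n1 - 1) - u2 * of_int m1) * of_int m2 < 0"
      using m2p by (simp add: mult_neg_pos)
    also have "(v2 * (of_int n1 - 1) - u2 * of_int m1) * of_int m2
       = v2 * ((of_int n1 - 1) * of_int m2) - (u2 * of_int m2) * of_int m1"
      by (simp add: algebra_simps)
    also have "\<dots> = v2 * ((of_int n1 - 1) * of_int m2 - of_int n2 * of_int m1)"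
      using e2 by (simp add: algebra_simps)
    finally have "(of_int n1 - 1) * of_int m2 - of_int n2 * of_int m1 < (0::real)"
      using pos by (simp add: mult_less_0_iff)
    then have "real_of_int ((n1 - 1) * m2 - n2 * m1) < 0" by simp
    then show ?thesis by linarith
  qed
  show False
    by (rule int_final[OF m1p n1p m2p n2p ex1 ex2 b1 b2 ord steepi dlt])
qed



definition LH :: "real \<Rightarrow> real \<Rightarrow> real \<Rightarrow> real \<Rightarrow> real \<Rightarrow> real \<Rightarrow> int \<Rightarrow> int \<Rightarrow> bool" where
  "LH u1 v1 w1 u2 v2 w2 N M \<longleftrightarrow>
     (\<forall>p\<in>ibox N M. (aff u1 v1 w1 p \<ge> 0) = (aff u2 v2 w2 p \<ge> 0)) \<and>
     (\<exists>p1 q1. p1 \<in> ibox N M \<and> q1 \<in> ibox N M \<and> p1 \<noteq> q1 \<and> aff u1 v1 w1 p1 = 0 \<and> aff u1 v1 w1 q1 = 0) \<and>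
     (\<exists>p2 q2. p2 \<in> ibox N M \<and> q2 \<in> ibox N M \<and> p2 \<noteq> q2 \<and> aff u2 v2 w2 p2 = 0 \<and> aff u2 v2 w2 q2 = 0)"

definition LC :: "real \<Rightarrow> real \<Rightarrow> real \<Rightarrow> real \<Rightarrow> real \<Rightarrow> real \<Rightarrow> int \<Rightarrow> int \<Rightarrow> bool" where
  "LC u1 v1 w1 u2 v2 w2 N M \<longleftrightarrow> (\<forall>p\<in>ibox N M. (aff u1 v1 w1 p = 0) = (aff u2 v2 w2 p = 0))"

lemma mono_full:
  assumes pos: "u1 > 0" "v1 > 0" "u2 > 0" "v2 > 0"
    and H: "LH u1 v1 w1 u2 v2 w2 N M"
  shows "LC u1 v1 w1 u2 v2 w2 N M"
proof -
  from H obtain p1 q1 p2 q2 where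
    same: "\<forall>p\<in>ibox N M. (aff u1 v1 w1 p \<ge> 0) = (aff u2 v2 w2 p \<ge> 0)"
    and z1: "p1 \<in> ibox N M" "q1 \<in> ibox N M" "p1 \<noteq> q1" "aff u1 v1 w1 p1 = 0" "aff u1 v1 w1 q1 = 0"
    and z2: "p2 \<in> ibox N M" "q2 \<in> ibox N M" "p2 \<noteq> q2" "aff u2 v2 w2 p2 = 0" "aff u2 v2 w2 q2 = 0"
    unfolding LH_def by blast
  have same': "\<forall>p\<in>ibox N M. (aff u2 v2 w2 p \<ge> 0) = (aff u1 v1 w1 p \<ge> 0)" using same by auto
  consider "u1 * v2 > u2 * v1" | "u2 * v1 > u1 * v2" | "u1 * v2 = u2 * v1" by linarith
  then show ?thesis
  proof cases
    case 1
    from mono_case[OF pos same z1 z2 1] show ?thesis ..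
  next
    case 2
    from mono_case[OF pos(3,4,1,2) same' z2 z1 2] show ?thesis ..
  next
    case 3
    define l where "l = v2 / v1"
    have lp: "l > 0" using pos by (simp add: l_def)
    have "l * u1 = u1 * v2 / v1" by (simp add: l_def)
    also have "\<dots> = u2 * v1 / v1" using 3 by simp
    also have "\<dots> = u2" using pos by simp
    finally have u2e: "u2 = l * u1" by simp
    have v2e: "v2 = l * v1" using pos by (simp add: l_def)
    define mu where "mu = w2 - l * w1"
    have rel: "\<And>p. aff u2 v2 w2 p = l * aff u1 v1 w1 p + mu"
      unfolding aff_def u2e v2e mu_def by (simp add: algebra_simps)
    have "(aff u1 v1 w1 p1 \<ge> 0) = (aff u2 v2 w2 p1 \<ge> 0)" using same z1(1) by blast
    then have "aff u2 v2 w2 p1 \<ge> 0" using z1(4) by simp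
    then have m1: "mu \<ge> 0" using rel[of p1] z1 by simp
    have "(aff u1 v1 w1 p2 \<ge> 0) = (aff u2 v2 w2 p2 \<ge> 0)" using same z2(1) by blast
    then have "aff u1 v1 w1 p2 \<ge> 0" using z2(4) by simp
    then have "l * aff u1 v1 w1 p2 \<ge> 0" using lp by simp
    moreover have "l * aff u1 v1 w1 p2 = - mu" using rel[of p2] z2 by simp
    ultimately have "mu \<le> 0" by linarith
    then have mu0: "mu = 0" using m1 by simp
    show ?thesis unfolding LC_def
    proof
      fix p assume "p \<in> ibox N M"
      have "aff u2 v2 w2 p = l * aff u1 v1 w1 p" using rel[of p] mu0 by simp
      then show "(aff u1 v1 w1 p = 0) = (aff u2 v2 w2 p = 0)" using lp by simp
    qed
  qed
qed

lemma aff_rx: "aff (-u) v (w + u * of_int N) (k, j) = aff u v w (N - k, j)"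
  by (simp add: aff_def algebra_simps)
lemma aff_ry: "aff u (-v) (w + v * of_int M) (k, j) = aff u v w (k, M - j)"
  by (simp add: aff_def algebra_simps)

lemma ibox_rx: "(k, j) \<in> ibox N M \<Longrightarrow> (N - k, j) \<in> ibox N M"
  by (simp add: mem_ibox)
lemma ibox_ry: "(k, j) \<in> ibox N M \<Longrightarrow> (k, M - j) \<in> ibox N M"
  by (simp add: mem_ibox)

lemma LH_rx:
  assumes "LH u1 v1 w1 u2 v2 w2 N M"
  shows "LH (-u1) v1 (w1 + u1 * of_int N) (-u2) v2 (w2 + u2 * of_int N) N M"
proof -
  from assms obtain p1 q1 p2 q2 where
    same: "\<forall>p\<in>ibox N M. (aff u1 v1 w1 p \<ge> 0) = (aff u2 v2 w2 p \<ge> 0)"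
    and z1: "p1 \<in> ibox N M" "q1 \<in> ibox N M" "p1 \<noteq> q1" "aff u1 v1 w1 p1 = 0" "aff u1 v1 w1 q1 = 0"
    and z2: "p2 \<in> ibox N M" "q2 \<in> ibox N M" "p2 \<noteq> q2" "aff u2 v2 w2 p2 = 0" "aff u2 v2 w2 q2 = 0"
    unfolding LH_def by blast
  let ?r = "\<lambda>p. (N - fst p, snd p)"
  have rb: "\<And>p. p \<in> ibox N M \<Longrightarrow> ?r p \<in> ibox N M" by (auto simp: mem_ibox ibox_def)
  have ra: "\<And>u v w p. aff (-u) v (w + u * of_int N) (?r p) = aff u v w p"
    by (simp add: aff_def algebra_simps)
  have rinj: "\<And>p q. ?r p = ?r q \<Longrightarrow> p = q" by (auto simp: prod_eq_iff)
  show ?thesis unfolding LH_def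
  proof (intro conjI)
    show "\<forall>p\<in>ibox N M. (0 \<le> aff (- u1) v1 (w1 + u1 * of_int N) p) = (0 \<le> aff (- u2) v2 (w2 + u2 * of_int N) p)"
    proof
      fix p assume "p \<in> ibox N M"
      then have "?r p \<in> ibox N M" by (rule rb)
      moreover have "?r (?r p) = p" by simp
      ultimately show "(0 \<le> aff (- u1) v1 (w1 + u1 * of_int N) p) = (0 \<le> aff (- u2) v2 (w2 + u2 * of_int N) p)"
        using same ra[of _ _ _ "?r p"] by metis
    qed
    show "\<exists>p1 q1. p1 \<in> ibox N M \<and> q1 \<in> ibox N M \<and> p1 \<noteq> q1 \<and> aff (- u1) v1 (w1 + u1 * of_int N) p1 = 0 \<and> aff (- u1) v1 (w1 + u1 * of_int N) q1 = 0"
      using z1 rb ra rinj by metis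
    show "\<exists>p1 q1. p1 \<in> ibox N M \<and> q1 \<in> ibox N M \<and> p1 \<noteq> q1 \<and> aff (- u2) v2 (w2 + u2 * of_int N) p1 = 0 \<and> aff (- u2) v2 (w2 + u2 * of_int N) q1 = 0"
      using z2 rb ra rinj by metis
  qed
qed

lemma LC_rx:
  assumes "LC (-u1) v1 (w1 + u1 * of_int N) (-u2) v2 (w2 + u2 * of_int N) N M"
  shows "LC u1 v1 w1 u2 v2 w2 N M"
  unfolding LC_def
proof
  fix p assume "p \<in> ibox N M"
  then have "(N - fst p, snd p) \<in> ibox N M" by (auto simp: mem_ibox ibox_def)
  moreover have "\<And>u v w. aff (-u) v (w + u * of_int N) (N - fst p, snd p) = aff u v w p"
    by (simp add: aff_def algebra_simps)
  ultimately show "(aff u1 v1 w1 p = 0) = (aff u2 v2 w2 p = 0)" using assms unfolding LC_def by metis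
qed

lemma LH_ry:
  assumes "LH u1 v1 w1 u2 v2 w2 N M"
  shows "LH u1 (-v1) (w1 + v1 * of_int M) u2 (-v2) (w2 + v2 * of_int M) N M"
proof -
  from assms obtain p1 q1 p2 q2 where
    same: "\<forall>p\<in>ibox N M. (aff u1 v1 w1 p \<ge> 0) = (aff u2 v2 w2 p \<ge> 0)"
    and z1: "p1 \<in> ibox N M" "q1 \<in> ibox N M" "p1 \<noteq> q1" "aff u1 v1 w1 p1 = 0" "aff u1 v1 w1 q1 = 0"
    and z2: "p2 \<in> ibox N M" "q2 \<in> ibox N M" "p2 \<noteq> q2" "aff u2 v2 w2 p2 = 0" "aff u2 v2 w2 q2 = 0"
    unfolding LH_def by blast
  let ?r = "\<lambda>p. (fst p, M - snd p)"
  have rb: "\<And>p. p \<in> ibox N M \<Longrightarrow> ?r p \<in> ibox N M" by (auto simp: mem_ibox ibox_def)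
  have ra: "\<And>u v w p. aff u (-v) (w + v * of_int M) (?r p) = aff u v w p"
    by (simp add: aff_def algebra_simps)
  have rinj: "\<And>p q. ?r p = ?r q \<Longrightarrow> p = q" by (auto simp: prod_eq_iff)
  show ?thesis unfolding LH_def
  proof (intro conjI)
    show "\<forall>p\<in>ibox N M. (0 \<le> aff u1 (- v1) (w1 + v1 * of_int M) p) = (0 \<le> aff u2 (- v2) (w2 + v2 * of_int M) p)"
    proof
      fix p assume "p \<in> ibox N M"
      then have "?r p \<in> ibox N M" by (rule rb)
      moreover have "?r (?r p) = p" by simp
      ultimately show "(0 \<le> aff u1 (- v1) (w1 + v1 * of_int M) p) = (0 \<le> aff u2 (- v2) (w2 + v2 * of_int M) p)"
        using same ra[of _ _ _ "?r p"] by metis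
    qed
    show "\<exists>p1 q1. p1 \<in> ibox N M \<and> q1 \<in> ibox N M \<and> p1 \<noteq> q1 \<and> aff u1 (- v1) (w1 + v1 * of_int M) p1 = 0 \<and> aff u1 (- v1) (w1 + v1 * of_int M) q1 = 0"
      using z1 rb ra rinj by metis
    show "\<exists>p1 q1. p1 \<in> ibox N M \<and> q1 \<in> ibox N M \<and> p1 \<noteq> q1 \<and> aff u2 (- v2) (w2 + v2 * of_int M) p1 = 0 \<and> aff u2 (- v2) (w2 + v2 * of_int M) q1 = 0"
      using z2 rb ra rinj by metis
  qed
qed

lemma LC_ry:
  assumes "LC u1 (-v1) (w1 + v1 * of_int M) u2 (-v2) (w2 + v2 * of_int M) N M"
  shows "LC u1 v1 w1 u2 v2 w2 N M"
  unfolding LC_def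
proof
  fix p assume "p \<in> ibox N M"
  then have "(fst p, M - snd p) \<in> ibox N M" by (auto simp: mem_ibox ibox_def)
  moreover have "\<And>u v w. aff u (-v) (w + v * of_int M) (fst p, M - snd p) = aff u v w p"
    by (simp add: aff_def algebra_simps)
  ultimately show "(aff u1 v1 w1 p = 0) = (aff u2 v2 w2 p = 0)" using assms unfolding LC_def by metis
qed

lemma mono_signs:
  fixes u1 v1 w1 u2 v2 w2 :: real and N M :: int
  assumes "u1 * u2 > 0" "v1 * v2 > 0" and H: "LH u1 v1 w1 u2 v2 w2 N M"
  shows "LC u1 v1 w1 u2 v2 w2 N M"
proof (cases "u1 > 0")
  case True
  then have u2: "u2 > 0" using assms(1) by (auto simp: zero_less_mult_iff)
  show ?thesis
  proof (cases "v1 > 0")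
    case True
    then have "v2 > 0" using assms(2) by (auto simp: zero_less_mult_iff)
    then show ?thesis using mono_full[OF \<open>u1 > 0\<close> True u2 _ H] by blast
  next
    case False
    then have "v1 < 0" "v2 < 0" using assms(2) by (auto simp: zero_less_mult_iff)
    then have "LC u1 (-v1) (w1 + v1 * of_int M) u2 (-v2) (w2 + v2 * of_int M) N M"
      using mono_full[OF \<open>u1 > 0\<close> _ u2 _ LH_ry[OF H]] by simp
    then show ?thesis by (rule LC_ry)
  qed
next
  case False
  then have u: "u1 < 0" "u2 < 0" using assms(1) by (auto simp: zero_less_mult_iff)
  show ?thesis
  proof (cases "v1 > 0")
    case True
    then have "v2 > 0" using assms(2) by (auto simp: zero_less_mult_iff)
    then have "LC (-u1) v1 (w1 + u1 * of_int N) (-u2) v2 (w2 + u2 * of_int N) N M"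
      using mono_full[OF _ True _ _ LH_rx[OF H]] u by simp
    then show ?thesis by (rule LC_rx)
  next
    case False
    then have "v1 < 0" "v2 < 0" using assms(2) by (auto simp: zero_less_mult_iff)
    then have "LC (-u1) (-v1) ((w1 + u1 * of_int N) + v1 * of_int M) (-u2) (-v2) ((w2 + u2 * of_int N) + v2 * of_int M) N M"
      using mono_full[OF _ _ _ _ LH_ry[OF LH_rx[OF H]]] u by simp
    then have "LC (-u1) v1 (w1 + u1 * of_int N) (-u2) v2 (w2 + u2 * of_int N) N M"
      by (rule LC_ry)
    then show ?thesis by (rule LC_rx)
  qed
qed


definition Zr :: "real \<Rightarrow> real \<Rightarrow> int \<times> int \<Rightarrow> bool" where
  "Zr b c p \<longleftrightarrow> aff 0 b c p \<ge> 0 \<and> (aff 0 b c (fst p, snd p - 1) < 0 \<or> aff 0 b c (fst p, snd p + 1) < 0)"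

definition Zc :: "real \<Rightarrow> real \<Rightarrow> int \<times> int \<Rightarrow> bool" where
  "Zc a c p \<longleftrightarrow> aff a 0 c p \<ge> 0 \<and> (aff a 0 c (fst p - 1, snd p) < 0 \<or> aff a 0 c (fst p + 1, snd p) < 0)"

lemma Zr_unique:
  assumes b: "b \<noteq> 0" and Z1: "Zr b c (k, j)" and Z2: "Zr b c (k', j')"
  shows "j = j'"
proof -
  have a1: "b * of_int j + c \<ge> 0" "b * (of_int j - 1) + c < 0 \<or> b * (of_int j + 1) + c < 0"
    using Z1 by (auto simp: Zr_def aff_kj algebra_simps)
  have a2: "b * of_int j' + c \<ge> 0" "b * (of_int j' - 1) + c < 0 \<or> b * (of_int j' + 1) + c < 0"
    using Z2 by (auto simp: Zr_def aff_kj algebra_simps)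
  show ?thesis
  proof (cases "b > 0")
    case True
    have c1: "b * (of_int j - 1) + c < 0" using a1 True by (auto simp: algebra_simps)
    have c2: "b * (of_int j' - 1) + c < 0" using a2 True by (auto simp: algebra_simps)
    have "b * (of_int j - of_int j') < b" using a2(1) c1 by (simp add: algebra_simps)
    then have x1: "of_int j - of_int j' < (1::real)" using True by simp
    have "b * (of_int j' - of_int j) < b" using a1(1) c2 by (simp add: algebra_simps)
    then have x2: "of_int j' - of_int j < (1::real)" using True by simp
    from x1 x2 have "real_of_int (j - j') < 1" "real_of_int (j' - j) < 1" by simp_all
    then show ?thesis by linarith
  next
    case False
    then have bn: "b < 0" using b by simp
    have c1: "b * (of_int j + 1) + c < 0" using a1 bn by (auto simp: algebra_simps)
    have c2: "b * (of_int j' + 1) + c < 0" using a2 bn by (auto simp: algebra_simps)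
    have "b * (of_int j' - of_int j - 1) > 0" using a2(1) c1 by (simp add: algebra_simps)
    then have x2: "of_int j' - of_int j < (1::real)" using bn by (simp add: zero_less_mult_iff)
    have "b * (of_int j - of_int j' - 1) > 0" using a1(1) c2 by (simp add: algebra_simps)
    then have x1: "of_int j - of_int j' < (1::real)" using bn by (simp add: zero_less_mult_iff)
    from x1 x2 have "real_of_int (j - j') < 1" "real_of_int (j' - j) < 1" by simp_all
    then show ?thesis by linarith
  qed
qed

lemma axis_row:
  fixes u v w b c :: real and N M :: int
  assumes bnz: "b \<noteq> 0"
   and same: "\<forall>p\<in>ibox N M. (aff u v w p \<ge> 0) = (aff 0 b c p \<ge> 0)"
   and neg: "\<exists>p\<in>ibox N M. aff 0 b c p < 0"
   and z: "p1 \<in> ibox N M" "q1 \<in> ibox N M" "p1 \<noteq> q1" "aff u v w p1 = 0" "aff u v w q1 = 0"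
  shows "\<forall>p\<in>ibox N M. (aff u v w p = 0) = Zr b c p"
proof -
  obtain kD jD where D: "(kD, jD) \<in> ibox N M" "aff 0 b c (kD, jD) < 0" using neg by auto
  have gj: "\<And>k k' j. aff 0 b c (k, j) = aff 0 b c (k', j)" by (simp add: aff_kj)
  have sm: "\<And>p. p \<in> ibox N M \<Longrightarrow> (aff u v w p \<ge> 0) = (aff 0 b c p \<ge> 0)"
    using same by blast
  have A: "\<And>p. p \<in> ibox N M \<Longrightarrow> aff u v w p = 0 \<Longrightarrow> Zr b c p"
  proof -
    fix p assume pb: "p \<in> ibox N M" and f0: "aff u v w p = 0"
    obtain k j where pkj: "p = (k, j)" by (cases p)
    have g0: "aff 0 b c (k, j) \<ge> 0" using sm[OF pb] f0 pkj by simp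
    show "Zr b c p"
    proof (rule ccontr)
      assume "\<not> Zr b c p"
      then have gm: "aff 0 b c (k, j - 1) \<ge> 0" and gp: "aff 0 b c (k, j + 1) \<ge> 0"
        using g0 by (auto simp: Zr_def pkj)
      have kDb: "(k, jD) \<in> ibox N M" using pb D(1) by (simp add: pkj mem_ibox)
      have fD: "aff u v w (k, jD) < 0"
      proof -
        have "aff 0 b c (k, jD) < 0" using D(2) gj by metis
        then show ?thesis using sm[OF kDb] by linarith
      qed
      have fkj: "u * of_int k + v * of_int j + w = 0" using f0 pkj by (simp add: aff_kj)
      have "jD \<noteq> j" using D(2) g0 gj by (metis not_less)
      then consider "jD < j" | "jD > j" by linarith
      then show False
      proof cases
        case 1
        have "jD \<noteq> j - 1" using D(2) gm gj by (metis not_less)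
        then have "jD < j - 1" using 1 by linarith
        then have b1: "(k, j - 1) \<in> ibox N M" using pb D(1) by (auto simp: pkj mem_ibox)
        have "aff u v w (k, j - 1) \<ge> 0" using sm[OF b1] gm by simp
        then have "v \<le> 0" using fkj by (simp add: aff_kj algebra_simps)
        moreover have "aff u v w (k, jD) = v * (of_int jD - of_int j)"
          using fkj by (simp add: aff_kj algebra_simps)
        moreover have "of_int jD - of_int j < (0::real)" using 1 by simp
        ultimately show False using fD by (smt (verit) mult_nonpos_nonpos)
      next
        case 2
        have "jD \<noteq> j + 1" using D(2) gp gj by (metis not_less)
        then have "jD > j + 1" using 2 by linarith
        then have b1: "(k, j + 1) \<in> ibox N M" using pb D(1) by (auto simp: pkj mem_ibox)
        have "aff u v w (k, j + 1) \<ge> 0" using sm[OF b1] gp by simp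
        then have "v \<ge> 0" using fkj by (simp add: aff_kj algebra_simps)
        moreover have "aff u v w (k, jD) = v * (of_int jD - of_int j)"
          using fkj by (simp add: aff_kj algebra_simps)
        moreover have "of_int jD - of_int j > (0::real)" using 2 by simp
        ultimately show False using fD by (smt (verit) mult_nonneg_nonneg)
      qed
    qed
  qed
  show ?thesis
  proof (intro ballI iffI)
    fix p assume "p \<in> ibox N M" "aff u v w p = 0"
    then show "Zr b c p" by (rule A)
  next
    fix p assume pb: "p \<in> ibox N M" and Zp: "Zr b c p"
    obtain k j where pkj: "p = (k, j)" by (cases p)
    obtain k1 j1 where p1kj: "p1 = (k1, j1)" by (cases p1)
    obtain k2 j2 where q1kj: "q1 = (k2, j2)" by (cases q1)
    have "Zr b c p1" "Zr b c q1" using A z by auto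
    then have "j1 = j" "j2 = j" using Zr_unique[OF bnz] Zp by (metis p1kj q1kj pkj)+
    then have "k1 \<noteq> k2" using z(3) p1kj q1kj by auto
    have e1: "u * of_int k1 + v * of_int j + w = 0" using z(4) p1kj \<open>j1 = j\<close> by (simp add: aff_kj)
    have e2: "u * of_int k2 + v * of_int j + w = 0" using z(5) q1kj \<open>j2 = j\<close> by (simp add: aff_kj)
    have "u * (of_int k1 - of_int k2) = (u * of_int k1 + v * of_int j + w) - (u * of_int k2 + v * of_int j + w)"
      by (simp add: algebra_simps)
    also have "\<dots> = 0" using e1 e2 by simp
    finally have "u * (of_int k1 - of_int k2) = 0" .
    moreover have "of_int k1 - of_int k2 \<noteq> (0::real)" using \<open>k1 \<noteq> k2\<close> by simp
    ultimately have "u = 0" by simp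
    then show "aff u v w p = 0" using e1 pkj by (simp add: aff_kj)
  qed
qed

lemma aff_sw: "aff u v w (prod.swap p) = aff v u w p"
  by (cases p) (simp add: aff_def algebra_simps)

lemma ibox_sw: "prod.swap p \<in> ibox M N \<longleftrightarrow> p \<in> ibox N M"
  by (cases p) (auto simp: mem_ibox)

lemma Zc_sw: "Zr a c (prod.swap p) = Zc a c p"
  by (cases p) (simp add: Zr_def Zc_def aff_def algebra_simps)

lemma axis_col:
  fixes u v w a c :: real and N M :: int
  assumes bnz: "a \<noteq> 0"
   and same: "\<forall>p\<in>ibox N M. (aff u v w p \<ge> 0) = (aff a 0 c p \<ge> 0)"
   and neg: "\<exists>p\<in>ibox N M. aff a 0 c p < 0"
   and z: "p1 \<in> ibox N M" "q1 \<in> ibox N M" "p1 \<noteq> q1" "aff u v w p1 = 0" "aff u v w q1 = 0"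
  shows "\<forall>p\<in>ibox N M. (aff u v w p = 0) = Zc a c p"
proof -
  have same': "\<forall>p\<in>ibox M N. (aff v u w p \<ge> 0) = (aff 0 a c p \<ge> 0)"
  proof
    fix p assume "p \<in> ibox M N"
    then have "prod.swap p \<in> ibox N M" using ibox_sw[of p N M] by simp
    then have "(aff u v w (prod.swap p) \<ge> 0) = (aff a 0 c (prod.swap p) \<ge> 0)" using same by blast
    then show "(aff v u w p \<ge> 0) = (aff 0 a c p \<ge> 0)" by (simp add: aff_sw)
  qed
  have neg': "\<exists>p\<in>ibox M N. aff 0 a c p < 0"
  proof -
    obtain p where p: "p \<in> ibox N M" "aff a 0 c p < 0" using neg by blast
    have "prod.swap p \<in> ibox M N" using p(1) ibox_sw[of p M N] by simp
    moreover have "aff 0 a c (prod.swap p) < 0" using p(2) aff_sw[of 0 a c p] by simp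
    ultimately show ?thesis by blast
  qed
  have z': "prod.swap p1 \<in> ibox M N" "prod.swap q1 \<in> ibox M N" "prod.swap p1 \<noteq> prod.swap q1"
      "aff v u w (prod.swap p1) = 0" "aff v u w (prod.swap q1) = 0"
    using z ibox_sw[of p1 M N] ibox_sw[of q1 M N] aff_sw[of v u w p1] aff_sw[of v u w q1]
    by (auto dest: arg_cong[where f=prod.swap])
  have R: "\<forall>p\<in>ibox M N. (aff v u w p = 0) = Zr a c p"
    by (rule axis_row[OF bnz same' neg' z'])
  show ?thesis
  proof
    fix p assume "p \<in> ibox N M"
    then have "prod.swap p \<in> ibox M N" by (simp add: ibox_sw)
    then have "(aff v u w (prod.swap p) = 0) = Zr a c (prod.swap p)" using R by blast
    then show "(aff u v w p = 0) = Zc a c p" by (simp add: aff_sw Zc_sw)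
  qed
qed

lemma L_general:
  fixes u1 v1 w1 u2 v2 w2 :: real and N M :: int
  assumes H: "LH u1 v1 w1 u2 v2 w2 N M" and neg: "\<exists>p\<in>ibox N M. aff u1 v1 w1 p < 0"
  shows "LC u1 v1 w1 u2 v2 w2 N M"
proof -
  from H obtain p1 q1 p2 q2 where
    same: "\<forall>p\<in>ibox N M. (aff u1 v1 w1 p \<ge> 0) = (aff u2 v2 w2 p \<ge> 0)"
    and z1: "p1 \<in> ibox N M" "q1 \<in> ibox N M" "p1 \<noteq> q1" "aff u1 v1 w1 p1 = 0" "aff u1 v1 w1 q1 = 0"
    and z2: "p2 \<in> ibox N M" "q2 \<in> ibox N M" "p2 \<noteq> q2" "aff u2 v2 w2 p2 = 0" "aff u2 v2 w2 q2 = 0"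
    unfolding LH_def by blast
  have sm: "\<And>p. p \<in> ibox N M \<Longrightarrow> (aff u1 v1 w1 p \<ge> 0) = (aff u2 v2 w2 p \<ge> 0)" using same by blast
  obtain pn where pn: "pn \<in> ibox N M" "aff u1 v1 w1 pn < 0" using neg by blast
  \<comment> \<open>generic: a convex combination giving an axis-parallel partition\<close>
  have comb: "\<And>t p. 0 \<le> (t::real) \<Longrightarrow> t \<le> 1 \<Longrightarrow> p \<in> ibox N M \<Longrightarrow>
      (aff u1 v1 w1 p \<ge> 0) = ((1 - t) * aff u1 v1 w1 p + t * aff u2 v2 w2 p \<ge> 0)"
  proof -
    fix t :: real and p assume t: "0 \<le> t" "t \<le> 1" and pb: "p \<in> ibox N M"
    show "(aff u1 v1 w1 p \<ge> 0) = ((1 - t) * aff u1 v1 w1 p + t * aff u2 v2 w2 p \<ge> 0)"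
    proof (cases "aff u1 v1 w1 p \<ge> 0")
      case True
      then have "aff u2 v2 w2 p \<ge> 0" using sm[OF pb] by simp
      then show ?thesis using True t by simp
    next
      case False
      then have "aff u2 v2 w2 p < 0" using sm[OF pb] by simp
      then have "(1 - t) * aff u1 v1 w1 p + t * aff u2 v2 w2 p < 0" using False t
        by (smt (verit) mult_nonneg_nonpos mult_pos_neg)
      then show ?thesis using False by simp
    qed
  qed
  have z1p: "aff u1 v1 w1 p1 \<ge> 0" using z1 by simp
  show ?thesis
  proof (cases "u1 * u2 \<le> 0")
    case True
    obtain t :: real where t: "0 \<le> t" "t \<le> 1" "(1 - t) * u1 + t * u2 = 0"
    proof (cases "u1 = 0")
      case True then show ?thesis using that[of 0] by simp
    next
      case False
      have d: "u1 - u2 \<noteq> 0" using \<open>u1 * u2 \<le> 0\<close> False by (auto simp: mult_le_0_iff)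
      define t where "t = u1 / (u1 - u2)"
      have "(1 - t) * u1 + t * u2 = u1 - t * (u1 - u2)" by (simp add: algebra_simps)
      also have "\<dots> = 0" using d by (simp add: t_def)
      finally have e: "(1 - t) * u1 + t * u2 = 0" .
      have "0 \<le> t \<and> t \<le> 1"
      proof (cases "u1 > 0")
        case True
        then have "u2 \<le> 0" using \<open>u1 * u2 \<le> 0\<close> by (simp add: mult_le_0_iff)
        then show ?thesis using True by (simp add: t_def divide_simps)
      next
        case False
        then have "u1 < 0" using \<open>u1 \<noteq> 0\<close> by simp
        then have "u2 \<ge> 0" using \<open>u1 * u2 \<le> 0\<close> by (simp add: mult_le_0_iff)
        then show ?thesis using \<open>u1 < 0\<close> by (simp add: t_def divide_simps)
      qed
      then show ?thesis using that e by blast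
    qed
    define b where "b = (1 - t) * v1 + t * v2"
    define c where "c = (1 - t) * w1 + t * w2"
    have geq: "\<And>p. aff 0 b c p = (1 - t) * aff u1 v1 w1 p + t * aff u2 v2 w2 p"
    proof -
      fix p
      have "(1 - t) * aff u1 v1 w1 p + t * aff u2 v2 w2 p
          = ((1 - t) * u1 + t * u2) * of_int (fst p) + b * of_int (snd p) + c"
        by (simp add: aff_def b_def c_def algebra_simps)
      then show "aff 0 b c p = (1 - t) * aff u1 v1 w1 p + t * aff u2 v2 w2 p"
        using t(3) by (simp add: aff_def)
    qed
    have s1: "\<forall>p\<in>ibox N M. (aff u1 v1 w1 p \<ge> 0) = (aff 0 b c p \<ge> 0)"
      using comb[OF t(1,2)] geq by simp
    have s2: "\<forall>p\<in>ibox N M. (aff u2 v2 w2 p \<ge> 0) = (aff 0 b c p \<ge> 0)"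
      using s1 sm by simp
    have ng: "\<exists>p\<in>ibox N M. aff 0 b c p < 0" using s1 pn by (metis not_le)
    have "b \<noteq> 0"
    proof
      assume "b = 0"
      then have "aff 0 b c p1 = aff 0 b c pn" by (simp add: aff_def)
      moreover have "aff 0 b c p1 \<ge> 0" using s1 z1(1) z1p by blast
      moreover have "aff 0 b c pn < 0" using s1 pn by (metis not_le)
      ultimately show False by simp
    qed
    have r1: "\<forall>p\<in>ibox N M. (aff u1 v1 w1 p = 0) = Zr b c p"
      by (rule axis_row[OF \<open>b \<noteq> 0\<close> s1 ng z1])
    have r2: "\<forall>p\<in>ibox N M. (aff u2 v2 w2 p = 0) = Zr b c p"
      by (rule axis_row[OF \<open>b \<noteq> 0\<close> s2 ng z2])
    show ?thesis unfolding LC_def using r1 r2 by simp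
  next
    case nu: False
    show ?thesis
    proof (cases "v1 * v2 \<le> 0")
      case True
      obtain t :: real where t: "0 \<le> t" "t \<le> 1" "(1 - t) * v1 + t * v2 = 0"
      proof (cases "v1 = 0")
        case True then show ?thesis using that[of 0] by simp
      next
        case False
        have d: "v1 - v2 \<noteq> 0" using \<open>v1 * v2 \<le> 0\<close> False by (auto simp: mult_le_0_iff)
        define t where "t = v1 / (v1 - v2)"
        have "(1 - t) * v1 + t * v2 = v1 - t * (v1 - v2)" by (simp add: algebra_simps)
        also have "\<dots> = 0" using d by (simp add: t_def)
        finally have e: "(1 - t) * v1 + t * v2 = 0" .
        have "0 \<le> t \<and> t \<le> 1"
        proof (cases "v1 > 0")
          case True
          then have "v2 \<le> 0" using \<open>v1 * v2 \<le> 0\<close> by (simp add: mult_le_0_iff)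
          then show ?thesis using True by (simp add: t_def divide_simps)
        next
          case False
          then have "v1 < 0" using \<open>v1 \<noteq> 0\<close> by simp
          then have "v2 \<ge> 0" using \<open>v1 * v2 \<le> 0\<close> by (simp add: mult_le_0_iff)
          then show ?thesis using \<open>v1 < 0\<close> by (simp add: t_def divide_simps)
        qed
        then show ?thesis using that e by blast
      qed
      define a where "a = (1 - t) * u1 + t * u2"
      define c where "c = (1 - t) * w1 + t * w2"
      have geq: "\<And>p. aff a 0 c p = (1 - t) * aff u1 v1 w1 p + t * aff u2 v2 w2 p"
      proof -
        fix p
        have "(1 - t) * aff u1 v1 w1 p + t * aff u2 v2 w2 p
            = a * of_int (fst p) + ((1 - t) * v1 + t * v2) * of_int (snd p) + c"
          by (simp add: aff_def a_def c_def algebra_simps)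
        then show "aff a 0 c p = (1 - t) * aff u1 v1 w1 p + t * aff u2 v2 w2 p"
          using t(3) by (simp add: aff_def)
      qed
      have s1: "\<forall>p\<in>ibox N M. (aff u1 v1 w1 p \<ge> 0) = (aff a 0 c p \<ge> 0)"
        using comb[OF t(1,2)] geq by simp
      have s2: "\<forall>p\<in>ibox N M. (aff u2 v2 w2 p \<ge> 0) = (aff a 0 c p \<ge> 0)"
        using s1 sm by simp
      have ng: "\<exists>p\<in>ibox N M. aff a 0 c p < 0" using s1 pn by (metis not_le)
      have "a \<noteq> 0"
      proof
        assume "a = 0"
        then have "aff a 0 c p1 = aff a 0 c pn" by (simp add: aff_def)
        moreover have "aff a 0 c p1 \<ge> 0" using s1 z1(1) z1p by blast
        moreover have "aff a 0 c pn < 0" using s1 pn by (metis not_le)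
        ultimately show False by simp
      qed
      have r1: "\<forall>p\<in>ibox N M. (aff u1 v1 w1 p = 0) = Zc a c p"
        by (rule axis_col[OF \<open>a \<noteq> 0\<close> s1 ng z1])
      have r2: "\<forall>p\<in>ibox N M. (aff u2 v2 w2 p = 0) = Zc a c p"
        by (rule axis_col[OF \<open>a \<noteq> 0\<close> s2 ng z2])
      show ?thesis unfolding LC_def using r1 r2 by simp
    next
      case False
      show ?thesis using mono_signs[of u1 u2 v1 v2 w1 w2 N M] nu False H by simp
    qed
  qed
qed


definition Pt :: "real \<Rightarrow> real \<Rightarrow> real \<Rightarrow> real \<Rightarrow> int \<times> int \<Rightarrow> real \<times> real" where
  "Pt a b dx dy p = (a + of_int (fst p) * dx, b + of_int (snd p) * dy)"

definition FF :: "real \<Rightarrow> real \<Rightarrow> real \<Rightarrow> real \<Rightarrow> real \<times> real \<Rightarrow> int \<times> int \<Rightarrow> real" where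
  "FF a b dx dy X p = aff (dx * fst X) (dy * snd X) (a * fst X + b * snd X - 1) p"

lemma FF_inner: "FF a b dx dy X p = inner (Pt a b dx dy p) X - 1"
  by (cases X) (simp add: FF_def Pt_def aff_def inner_prod_def algebra_simps)

lemma FF_add: "FF a b dx dy (X + s *\<^sub>R d) p = FF a b dx dy X p + s * inner (Pt a b dx dy p) d"
  by (simp add: FF_inner inner_add_right algebra_simps)

lemma FF_scale: "FF a b dx dy (t *\<^sub>R X) p = t * (FF a b dx dy X p + 1) - 1"
  by (simp add: FF_inner)

lemma FF_comb: "FF a b dx dy (Y + t *\<^sub>R (X - Y)) p = (1 - t) * FF a b dx dy Y p + t * FF a b dx dy X p"
  by (simp add: FF_inner inner_add_right inner_diff_right algebra_simps)

lemma det_par: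
  fixes A B :: "real \<times> real"
  assumes "A \<noteq> 0" "fst A * snd B - snd A * fst B = 0"
  shows "\<exists>t. B = t *\<^sub>R A"
proof (cases "fst A = 0")
  case False
  define t where "t = fst B / fst A"
  have "snd B = t * snd A" using assms(2) False by (simp add: t_def field_simps)
  moreover have "fst B = t * fst A" using False by (simp add: t_def)
  ultimately show ?thesis by (intro exI[of _ t]) (simp add: prod_eq_iff)
next
  case True
  then have s: "snd A \<noteq> 0" using assms(1) by (simp add: prod_eq_iff)
  then have "fst B = 0" using assms(2) True by simp
  define t where "t = snd B / snd A"
  have "snd B = t * snd A" using s by (simp add: t_def)
  then show ?thesis using True \<open>fst B = 0\<close> by (intro exI[of _ t]) (simp add: prod_eq_iff)
qed

lemma two_eq_unique:
  fixes A B X Y :: "real \<times> real"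
  assumes "A \<noteq> B" "inner A X = 1" "inner B X = 1" "inner A Y = 1" "inner B Y = 1"
  shows "X = Y"
proof -
  obtain a1 a2 where A: "A = (a1, a2)" by (cases A)
  obtain b1 b2 where B: "B = (b1, b2)" by (cases B)
  obtain x1 x2 where X: "X = (x1, x2)" by (cases X)
  obtain y1 y2 where Y: "Y = (y1, y2)" by (cases Y)
  have e: "a1 * x1 + a2 * x2 = 1" "b1 * x1 + b2 * x2 = 1" "a1 * y1 + a2 * y2 = 1" "b1 * y1 + b2 * y2 = 1"
    using assms(2-5) by (simp_all add: A B X Y inner_prod_def)
  show ?thesis
  proof (cases "a1 * b2 - a2 * b1 = 0")
    case False
    have "(a1 * b2 - a2 * b1) * (x1 - y1) = b2 * (a1 * x1 + a2 * x2) - a2 * (b1 * x1 + b2 * x2)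
        - (b2 * (a1 * y1 + a2 * y2) - a2 * (b1 * y1 + b2 * y2))" by (simp add: algebra_simps)
    then have "(a1 * b2 - a2 * b1) * (x1 - y1) = 0" using e by simp
    then have 1: "x1 = y1" using False by simp
    have "(a1 * b2 - a2 * b1) * (x2 - y2) = a1 * (b1 * x1 + b2 * x2) - b1 * (a1 * x1 + a2 * x2)
        - (a1 * (b1 * y1 + b2 * y2) - b1 * (a1 * y1 + a2 * y2))" by (simp add: algebra_simps)
    then have "(a1 * b2 - a2 * b1) * (x2 - y2) = 0" using e by simp
    then have "x2 = y2" using False by simp
    then show ?thesis using 1 by (simp add: X Y)
  next
    case True
    have "A \<noteq> 0" using assms(2) by auto
    then obtain t where t: "B = t *\<^sub>R A" using det_par[of A B] True by (auto simp: A B)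
    have "inner B X = t * inner A X" using t by simp
    then have "t = 1" using assms(2,3) by simp
    then show ?thesis using t assms(1) by simp
  qed
qed

lemma card_le1:
  assumes "\<forall>x\<in>A. \<forall>y\<in>A. x = y"
  shows "finite A \<and> card A \<le> 1"
proof (cases "A = {}")
  case False
  then obtain x where "x \<in> A" by auto
  then have "A = {x}" using assms by auto
  then show ?thesis by simp
qed simp

lemma card_le2:
  assumes "\<forall>x\<in>A. \<forall>y\<in>A. \<forall>z\<in>A. x = y \<or> y = z \<or> x = z"
  shows "finite A \<and> card A \<le> 2"
proof (cases "A = {}")
  case False
  then obtain x where x: "x \<in> A" by auto
  show ?thesis
  proof (cases "A - {x} = {}")
    case True
    then have "A = {x}" using x by auto
    then show ?thesis by simp
  next
    case False
    then obtain y where y: "y \<in> A" "y \<noteq> x" by auto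
    have "A \<subseteq> {x, y}" using assms x y by blast
    moreover have "card {x, y} \<le> 2" by (simp add: card_insert_if)
    ultimately show ?thesis using card_mono[of "{x,y}" A] finite_subset[of A "{x,y}"] by auto
  qed
qed simp


locale geo =
  fixes a b dx dy :: real and N M :: nat and X0 :: "real \<times> real"
  assumes dxp: "dx > 0" and dyp: "dy > 0"
    and nz: "\<forall>p\<in>ibox (int N) (int M). FF a b dx dy X0 p \<noteq> 0"
begin

abbreviation "L \<equiv> ibox (int N) (int M)"
abbreviation "F \<equiv> FF a b dx dy"
abbreviation "P \<equiv> Pt a b dx dy"

definition "K = {X. \<forall>p\<in>L. (F X0 p > 0 \<longrightarrow> F X p \<ge> 0) \<and> (F X0 p < 0 \<longrightarrow> F X p \<le> 0)}"
definition "UI = {p\<in>L. F X0 p > 0}"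
definition "DI = {p\<in>L. F X0 p < 0}"

lemma P_inj: "P p = P q \<Longrightarrow> p = q"
  using dxp dyp by (cases p, cases q) (auto simp: Pt_def prod_eq_iff)

lemma K_UI: "X \<in> K \<Longrightarrow> p \<in> UI \<Longrightarrow> F X p \<ge> 0"
  by (auto simp: K_def UI_def)
lemma K_DI: "X \<in> K \<Longrightarrow> p \<in> DI \<Longrightarrow> F X p \<le> 0"
  by (auto simp: K_def DI_def)
lemma L_UD: "p \<in> L \<Longrightarrow> p \<in> UI \<or> p \<in> DI"
  using nz by (auto simp: UI_def DI_def neq_iff)
lemma UD_disj: "p \<in> UI \<Longrightarrow> p \<in> DI \<Longrightarrow> False"
  by (auto simp: UI_def DI_def)
lemma UI_L: "p \<in> UI \<Longrightarrow> p \<in> L" by (simp add: UI_def)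
lemma DI_L: "p \<in> DI \<Longrightarrow> p \<in> L" by (simp add: DI_def)

lemma K_eq: "K = (\<Inter>p\<in>L. {X. 0 \<le> sgn (F X0 p) * F X p})"
proof -
  have "\<And>X p. p \<in> L \<Longrightarrow> ((F X0 p > 0 \<longrightarrow> F X p \<ge> 0) \<and> (F X0 p < 0 \<longrightarrow> F X p \<le> 0))
      = (0 \<le> sgn (F X0 p) * F X p)"
    using nz by (auto simp: sgn_if)
  then show ?thesis unfolding K_def by blast
qed

lemma F_cont: "continuous_on UNIV (\<lambda>X. c * F X p)"
  unfolding FF_inner by (intro continuous_intros)

lemma K_closed: "closed K"
  unfolding K_eq
  by (intro closed_INT ballI closed_Collect_le continuous_on_const F_cont)

lemma K_convex: "convex K"
proof (rule convexI)
  fix X Y :: "real \<times> real" and u v :: real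
  assume X: "X \<in> K" and Y: "Y \<in> K" and uv: "0 \<le> u" "0 \<le> v" "u + v = 1"
  have lin: "F (u *\<^sub>R X + v *\<^sub>R Y) p = u * F X p + v * F Y p" for p
  proof -
    have "F (u *\<^sub>R X + v *\<^sub>R Y) p = u * inner (P p) X + v * inner (P p) Y - 1"
      by (simp add: FF_inner inner_add_right)
    also have "\<dots> = u * (inner (P p) X - 1) + v * (inner (P p) Y - 1)" using uv(3) by (simp add: algebra_simps)
    finally show ?thesis by (simp add: FF_inner)
  qed
  show "u *\<^sub>R X + v *\<^sub>R Y \<in> K"
    unfolding K_def
  proof (intro CollectI ballI conjI impI)
    fix p assume "p \<in> L"
    {
      assume "F X0 p > 0"
      then have "F X p \<ge> 0" "F Y p \<ge> 0" using X Y \<open>p \<in> L\<close> by (auto simp: K_def)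
      then show "F (u *\<^sub>R X + v *\<^sub>R Y) p \<ge> 0" using uv by (simp add: lin)
    }
    {
      assume "F X0 p < 0"
      then have "F X p \<le> 0" "F Y p \<le> 0" using X Y \<open>p \<in> L\<close> by (auto simp: K_def)
      then show "F (u *\<^sub>R X + v *\<^sub>R Y) p \<le> 0" using uv
        by (simp add: lin add_nonpos_nonpos mult_nonneg_nonpos)
    }
  qed
qed

lemma F_P0: "P p = 0 \<Longrightarrow> F X p = -1"
  by (simp add: FF_inner)

lemma extreme_two:
  assumes ext: "X extreme_point_of K"
  shows "\<exists>p\<in>L. \<exists>q\<in>L. p \<noteq> q \<and> F X p = 0 \<and> F X q = 0"
proof (rule ccontr)
  assume H: "\<not> ?thesis"
  have XK: "X \<in> K" using ext by (simp add: extreme_point_of_def)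
  define T where "T = {p\<in>L. F X p = 0}"
  have Tsub: "\<forall>p\<in>T. \<forall>q\<in>T. p = q" using H by (auto simp: T_def)
  obtain d :: "real \<times> real" where d: "d \<noteq> 0" "\<forall>p\<in>T. inner (P p) d = 0"
  proof (cases "T = {}")
    case True
    then show ?thesis using that[of "(1, 0)"] by (simp add: zero_prod_def)
  next
    case False
    then obtain p0 where p0: "p0 \<in> T" by auto
    then have Tp0: "T = {p0}" using Tsub by auto
    have "P p0 \<noteq> 0"
    proof
      assume "P p0 = 0"
      then have "F X p0 = -1" by (rule F_P0)
      then show False using p0 by (simp add: T_def)
    qed
    define d where "d = (- snd (P p0), fst (P p0))"
    have "d \<noteq> 0" using \<open>P p0 \<noteq> 0\<close> by (auto simp: d_def prod_eq_iff)
    moreover have "inner (P p0) d = 0" by (simp add: d_def inner_prod_def)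
    ultimately show ?thesis using that Tp0 by auto
  qed
  define V where "V = (\<Inter>p\<in>L - T. {Y. 0 < sgn (F X0 p) * F Y p})"
  have "open V" unfolding V_def
    using finite_ibox
    by (intro open_INT ballI open_Collect_less continuous_on_const F_cont) auto
  moreover have "X \<in> V"
  proof -
    have "\<And>p. p \<in> L - T \<Longrightarrow> 0 < sgn (F X0 p) * F X p"
    proof -
      fix p assume pL: "p \<in> L - T"
      then have "F X p \<noteq> 0" by (simp add: T_def)
      moreover have "0 \<le> sgn (F X0 p) * F X p" using XK pL unfolding K_eq by auto
      moreover have "F X0 p \<noteq> 0" using nz pL by auto
      ultimately show "0 < sgn (F X0 p) * F X p" by (auto simp: sgn_if)
    qed
    then show ?thesis by (simp add: V_def)
  qed
  ultimately obtain e where e: "e > 0" "ball X e \<subseteq> V" using open_contains_ball by blast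
  define s where "s = e / (2 * norm d)"
  have s: "s > 0" "norm (s *\<^sub>R d) < e" using e d by (auto simp: s_def)
  have inK: "X + t *\<^sub>R d \<in> K" if t: "\<bar>t\<bar> \<le> s" for t
  proof -
    have "norm (t *\<^sub>R d) \<le> norm (s *\<^sub>R d)" using t s(1) by (simp add: mult_right_mono)
    then have "X + t *\<^sub>R d \<in> ball X e" using s(2) by (simp add: dist_norm)
    then have YV: "X + t *\<^sub>R d \<in> V" using e by auto
    show ?thesis unfolding K_eq
    proof (intro InterI, clarsimp)
      fix p assume pL: "p \<in> L"
      show "0 \<le> sgn (F X0 p) * F (X + t *\<^sub>R d) p"
      proof (cases "p \<in> T")
        case True
        have "inner (P p) d = 0" using d(2) True by blast
        moreover have "F X p = 0" using True by (simp add: T_def)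
        ultimately have "F (X + t *\<^sub>R d) p = 0" by (simp add: FF_add)
        then show ?thesis by simp
      next
        case False
        then show ?thesis using YV pL by (auto simp: V_def less_imp_le)
      qed
    qed
  qed
  have "X + s *\<^sub>R d \<in> K" using inK s by simp
  moreover have "X + (- s) *\<^sub>R d \<in> K" using inK[of "- s"] s by simp
  moreover have "X + s *\<^sub>R d \<noteq> X + (- s) *\<^sub>R d"
  proof
    assume "X + s *\<^sub>R d = X + (- s) *\<^sub>R d"
    then have "s *\<^sub>R d + s *\<^sub>R d = 0" by (simp add: eq_neg_iff_add_eq_0)
    then have "(2 * s) *\<^sub>R d = 0" by (simp add: scaleR_2[symmetric])
    then show False using s(1) d(1) by simp
  qed
  moreover have "X = midpoint (X + s *\<^sub>R d) (X + (- s) *\<^sub>R d)"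
    by (simp add: midpoint_def algebra_simps scaleR_left_distrib[symmetric])
  ultimately show False using ext unfolding extreme_point_of_def
    by (metis midpoint_in_open_segment)
qed


lemma F_kj: "F X (k, j) = (dx * fst X) * of_int k + (dy * snd X) * of_int j + (a * fst X + b * snd X - 1)"
  by (simp add: FF_def aff_def)

lemma F_aff: "F X = aff (dx * fst X) (dy * snd X) (a * fst X + b * snd X - 1)"
  by (simp add: FF_def fun_eq_iff)

lemma inv_eq: "(c::real) * s = 1 \<Longrightarrow> s = 1 / c"
  by (cases "c = 0") (auto simp: eq_divide_eq mult.commute)

lemma polar_pts:
  assumes U0: "UI = {}" and ext: "X extreme_point_of K"
  shows "X \<in> {(0, 1 / b), (0, 1 / (b + real M * dy)), (1 / a, 0), (1 / (a + real N * dx), 0)}"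
proof -
  have XK: "X \<in> K" using ext by (simp add: extreme_point_of_def)
  obtain p q where pq: "p \<in> L" "q \<in> L" "p \<noteq> q" "F X p = 0" "F X q = 0"
    using extreme_two[OF ext] by blast
  have le0: "\<And>r. r \<in> L \<Longrightarrow> F X r \<le> 0"
    using L_UD U0 K_DI XK by blast
  define u where "u = dx * fst X"
  define v where "v = dy * snd X"
  have Fkj: "\<And>k j. F X (k, j) = u * of_int k + v * of_int j + (a * fst X + b * snd X - 1)"
    by (simp add: F_kj u_def v_def)
  have pos: "\<And>k j. (k, j) \<in> L \<Longrightarrow> F X (k, j) = 0 \<Longrightarrow>
      (u > 0 \<longrightarrow> k = int N) \<and> (u < 0 \<longrightarrow> k = 0) \<and> (v > 0 \<longrightarrow> j = int M) \<and> (v < 0 \<longrightarrow> j = 0)"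
  proof -
    fix k j assume kj: "(k, j) \<in> L" "F X (k, j) = 0"
    have A: "u > 0 \<longrightarrow> k = int N"
    proof
      assume "u > 0"
      show "k = int N"
      proof (rule ccontr)
        assume "k \<noteq> int N"
        then have "(k + 1, j) \<in> L" using kj(1) by (auto simp: mem_ibox)
        moreover have "F X (k + 1, j) = F X (k, j) + u" by (simp add: Fkj algebra_simps)
        ultimately show False using le0 kj(2) \<open>u > 0\<close> by fastforce
      qed
    qed
    have B: "u < 0 \<longrightarrow> k = 0"
    proof
      assume "u < 0"
      show "k = 0"
      proof (rule ccontr)
        assume "k \<noteq> 0"
        then have "(k - 1, j) \<in> L" using kj(1) by (auto simp: mem_ibox)
        moreover have "F X (k - 1, j) = F X (k, j) - u" by (simp add: Fkj algebra_simps)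
        ultimately show False using le0 kj(2) \<open>u < 0\<close> by fastforce
      qed
    qed
    have C: "v > 0 \<longrightarrow> j = int M"
    proof
      assume "v > 0"
      show "j = int M"
      proof (rule ccontr)
        assume "j \<noteq> int M"
        then have "(k, j + 1) \<in> L" using kj(1) by (auto simp: mem_ibox)
        moreover have "F X (k, j + 1) = F X (k, j) + v" by (simp add: Fkj algebra_simps)
        ultimately show False using le0 kj(2) \<open>v > 0\<close> by fastforce
      qed
    qed
    have D: "v < 0 \<longrightarrow> j = 0"
    proof
      assume "v < 0"
      show "j = 0"
      proof (rule ccontr)
        assume "j \<noteq> 0"
        then have "(k, j - 1) \<in> L" using kj(1) by (auto simp: mem_ibox)
        moreover have "F X (k, j - 1) = F X (k, j) - v" by (simp add: Fkj algebra_simps)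
        ultimately show False using le0 kj(2) \<open>v < 0\<close> by fastforce
      qed
    qed
    show "(u > 0 \<longrightarrow> k = int N) \<and> (u < 0 \<longrightarrow> k = 0) \<and> (v > 0 \<longrightarrow> j = int M) \<and> (v < 0 \<longrightarrow> j = 0)"
      using A B C D by blast
  qed
  obtain kp jp where p: "p = (kp, jp)" by (cases p)
  obtain kq jq where q: "q = (kq, jq)" by (cases q)
  have pp: "(u > 0 \<longrightarrow> kp = int N) \<and> (u < 0 \<longrightarrow> kp = 0) \<and> (v > 0 \<longrightarrow> jp = int M) \<and> (v < 0 \<longrightarrow> jp = 0)"
    using pos pq p by blast
  have qq: "(u > 0 \<longrightarrow> kq = int N) \<and> (u < 0 \<longrightarrow> kq = 0) \<and> (v > 0 \<longrightarrow> jq = int M) \<and> (v < 0 \<longrightarrow> jq = 0)"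
    using pos pq q by blast
  have Fp: "u * of_int kp + v * of_int jp + (a * fst X + b * snd X - 1) = 0"
    using pq(4) p Fkj by simp
  show ?thesis
  proof (cases "u = 0")
    case True
    then have x0: "fst X = 0" using dxp by (simp add: u_def)
    have "v \<noteq> 0"
    proof
      assume "v = 0"
      then have "snd X = 0" using dyp by (simp add: v_def)
      then show False using Fp True x0 \<open>v = 0\<close> by simp
    qed
    then consider "v > 0" | "v < 0" by linarith
    then show ?thesis
    proof cases
      case 1
      then have "jp = int M" using pp by simp
      then have "(b + real M * dy) * snd X = 1" using Fp True x0 by (simp add: v_def algebra_simps)
      then have "snd X = 1 / (b + real M * dy)" by (rule inv_eq)
      then show ?thesis using x0 by (simp add: prod_eq_iff)
    next
      case 2
      then have "jp = 0" using pp by simp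
      then have "b * snd X = 1" using Fp True x0 by (simp add: v_def algebra_simps)
      then have "snd X = 1 / b" by (rule inv_eq)
      then show ?thesis using x0 by (simp add: prod_eq_iff)
    qed
  next
    case uF: False
    show ?thesis
    proof (cases "v = 0")
      case True
      then have y0: "snd X = 0" using dyp by (simp add: v_def)
      consider "u > 0" | "u < 0" using uF by linarith
      then show ?thesis
      proof cases
        case 1
        then have "kp = int N" using pp by simp
        then have "(a + real N * dx) * fst X = 1" using Fp True y0 by (simp add: u_def algebra_simps)
        then have "fst X = 1 / (a + real N * dx)" by (rule inv_eq)
        then show ?thesis using y0 by (simp add: prod_eq_iff)
      next
        case 2
        then have "kp = 0" using pp by simp
        then have "a * fst X = 1" using Fp True y0 by (simp add: u_def algebra_simps)
        then have "fst X = 1 / a" by (rule inv_eq)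
        then show ?thesis using y0 by (simp add: prod_eq_iff)
      qed
    next
      case False
      have "kp = kq" using pp qq uF by (cases "u > 0") auto
      moreover have "jp = jq" using pp qq False by (cases "v > 0") auto
      ultimately show ?thesis using pq(3) p q by simp
    qed
  qed
qed

end


lemma opp_sign:
  fixes l1 l2 d :: real
  assumes "l1 * d \<ge> 0" "l2 * (- d) \<ge> 0" "d \<noteq> 0" "l1 \<noteq> 0" "l2 \<noteq> 0"
  shows "l1 * l2 < 0"
proof (cases "d > 0")
  case True
  have "l1 \<ge> 0" using assms(1) True by (auto simp: zero_le_mult_iff mult_le_0_iff)
  moreover have "l2 \<le> 0" using assms(2) True by (auto simp: zero_le_mult_iff mult_le_0_iff)
  ultimately have "l1 > 0" "l2 < 0" using assms(4,5) by auto
  then show ?thesis by (simp add: mult_pos_neg)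
next
  case False
  then have dn: "d < 0" using assms(3) by simp
  have "l1 \<le> 0" using assms(1) dn by (auto simp: zero_le_mult_iff mult_le_0_iff)
  moreover have "l2 \<ge> 0" using assms(2) dn by (auto simp: zero_le_mult_iff mult_le_0_iff)
  ultimately have "l1 < 0" "l2 > 0" using assms(4,5) by auto
  then show ?thesis by (simp add: mult_neg_pos)
qed

lemma three_neg:
  fixes l1 l2 l3 :: real
  assumes "l1 * l2 < 0" "l1 * l3 < 0" "l2 * l3 < 0"
  shows False
  using assms by (auto simp: mult_less_0_iff)

lemma normal_lambda:
  fixes n X :: "real \<times> real"
  assumes "n \<noteq> 0" "X \<noteq> 0" "inner n X = 0"
  shows "\<exists>l. l \<noteq> 0 \<and> (\<forall>Y. inner n Y = l * (fst X * snd Y - snd X * fst Y))"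
proof -
  obtain n1 n2 where n: "n = (n1, n2)" by (cases n)
  obtain x1 x2 where X: "X = (x1, x2)" by (cases X)
  have e: "n1 * x1 + n2 * x2 = 0" using assms(3) by (simp add: n X inner_prod_def)
  show ?thesis
  proof (cases "x1 = 0")
    case False
    define l where "l = n2 / x1"
    have n1e: "n1 = - l * x2" using e False by (simp add: l_def field_simps)
    have "l \<noteq> 0"
    proof
      assume "l = 0"
      then have "n2 = 0" using False by (simp add: l_def)
      moreover have "n1 = 0" using n1e \<open>l = 0\<close> by simp
      ultimately show False using assms(1) n by (simp add: zero_prod_def)
    qed
    moreover have "\<forall>Y. inner n Y = l * (fst X * snd Y - snd X * fst Y)"
    proof
      fix Y :: "real \<times> real"
      have "n2 = l * x1" using False by (simp add: l_def)
      then show "inner n Y = l * (fst X * snd Y - snd X * fst Y)"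
        using n1e by (cases Y) (simp add: n X inner_prod_def algebra_simps)
    qed
    ultimately show ?thesis by blast
  next
    case True
    then have x2: "x2 \<noteq> 0" using assms(2) X by (auto simp: zero_prod_def)
    then have n2: "n2 = 0" using e True by simp
    define l where "l = - n1 / x2"
    have "l \<noteq> 0" using assms(1) n n2 x2 by (auto simp: l_def zero_prod_def)
    moreover have "\<forall>Y. inner n Y = l * (fst X * snd Y - snd X * fst Y)"
    proof
      fix Y :: "real \<times> real"
      show "inner n Y = l * (fst X * snd Y - snd X * fst Y)"
        using True n2 x2 by (cases Y) (simp add: n X inner_prod_def l_def field_simps)
    qed
    ultimately show ?thesis by blast
  qed
qed

context geo begin

definition "mixed X \<longleftrightarrow> (\<exists>p\<in>UI. \<exists>q\<in>DI. F X p = 0 \<and> F X q = 0)"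

lemma X0_K: "X0 \<in> K" by (auto simp: K_def)

lemma F_zero_vec: "F 0 p = -1"
  by (simp add: FF_inner)

lemma DI_ne:
  assumes U: "UI \<noteq> {}" and bK: "bounded K"
  shows "DI \<noteq> {}"
proof
  assume D0: "DI = {}"
  have allU: "\<And>p. p \<in> L \<Longrightarrow> F X0 p > 0" using L_UD D0 by (auto simp: UI_def)
  have tK: "t *\<^sub>R X0 \<in> K" if t: "t \<ge> 1" for t
    unfolding K_def
  proof (intro CollectI ballI conjI impI)
    fix p assume pL: "p \<in> L"
    then have Fp: "F X0 p > 0" by (rule allU)
    have h: "t * (F X0 p + 1) \<ge> 1 * (F X0 p + 1)" using t Fp by (intro mult_right_mono) auto
    then have h2: "t * (F X0 p + 1) \<ge> F X0 p + 1" by simp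
    show "F (t *\<^sub>R X0) p \<ge> 0" unfolding FF_scale using h2 Fp by linarith
  next
    fix p assume "p \<in> L" "F X0 p < 0"
    then show "F (t *\<^sub>R X0) p \<le> 0" using allU by fastforce
  qed
  obtain p where "p \<in> UI" using U by auto
  then have "F X0 p > 0" by (simp add: UI_def)
  then have X0nz: "X0 \<noteq> 0" using F_zero_vec[of p] by auto
  obtain B where B: "B > 0" "\<forall>Y\<in>K. norm Y \<le> B" using bK by (auto simp: bounded_pos)
  define t where "t = max 1 ((B + 1) / norm X0)"
  have "t *\<^sub>R X0 \<in> K" using tK by (simp add: t_def)
  then have "norm (t *\<^sub>R X0) \<le> B" using B by blast
  moreover have "norm (t *\<^sub>R X0) \<ge> B + 1"
  proof -
    have np: "norm X0 > 0" using X0nz by simp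
    have "norm (t *\<^sub>R X0) = t * norm X0" by (simp add: t_def)
    also have "\<dots> \<ge> ((B + 1) / norm X0) * norm X0" using np by (intro mult_right_mono) (auto simp: t_def)
    also have "((B + 1) / norm X0) * norm X0 = B + 1" using np by simp
    finally show ?thesis .
  qed
  ultimately show False by simp
qed

lemma pureU_iff:
  assumes XK: "X \<in> K" and pure: "\<forall>q\<in>L. F X q = 0 \<longrightarrow> q \<in> UI" and pL: "p \<in> L"
  shows "(F X p \<ge> 0) = (p \<in> UI)"
proof
  assume "F X p \<ge> 0"
  show "p \<in> UI"
  proof (rule ccontr)
    assume "p \<notin> UI"
    then have "p \<in> DI" using L_UD pL by blast
    then have "F X p \<le> 0" using K_DI XK by blast
    then have "F X p = 0" using \<open>F X p \<ge> 0\<close> by simp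
    then show False using pure pL \<open>p \<notin> UI\<close> by blast
  qed
next
  assume "p \<in> UI"
  then show "F X p \<ge> 0" using K_UI XK by blast
qed

lemma pureD_iff:
  assumes XK: "X \<in> K" and pure: "\<forall>q\<in>L. F X q = 0 \<longrightarrow> q \<in> DI" and pL: "p \<in> L"
  shows "(- F X p \<ge> 0) = (p \<in> DI)"
proof
  assume "- F X p \<ge> 0"
  show "p \<in> DI"
  proof (rule ccontr)
    assume "p \<notin> DI"
    then have "p \<in> UI" using L_UD pL by blast
    then have "F X p \<ge> 0" using K_UI XK by blast
    then have "F X p = 0" using \<open>- F X p \<ge> 0\<close> by simp
    then show False using pure pL \<open>p \<notin> DI\<close> by blast
  qed
next
  assume "p \<in> DI"
  then show "- F X p \<ge> 0" using K_DI XK by fastforce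
qed

lemma zeros_same_imp_eq:
  assumes e1: "X1 extreme_point_of K"
    and Z: "\<forall>p\<in>L. (F X1 p = 0) = (F X2 p = 0)"
  shows "X1 = X2"
proof -
  obtain p q where pq: "p \<in> L" "q \<in> L" "p \<noteq> q" "F X1 p = 0" "F X1 q = 0"
    using extreme_two[OF e1] by blast
  have "F X2 p = 0" "F X2 q = 0" using Z pq by auto
  moreover have "P p \<noteq> P q" using pq(3) P_inj by blast
  ultimately show ?thesis using pq two_eq_unique[of "P p" "P q" X1 X2] by (simp add: FF_inner)
qed

lemma pureU_unique:
  assumes D: "DI \<noteq> {}" and e1: "X1 extreme_point_of K" and e2: "X2 extreme_point_of K"
    and pu1: "\<forall>q\<in>L. F X1 q = 0 \<longrightarrow> q \<in> UI" and pu2: "\<forall>q\<in>L. F X2 q = 0 \<longrightarrow> q \<in> UI"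
  shows "X1 = X2"
proof -
  have K1: "X1 \<in> K" and K2: "X2 \<in> K" using e1 e2 by (auto simp: extreme_point_of_def)
  define u1 v1 w1 where "u1 = dx * fst X1" "v1 = dy * snd X1" "w1 = a * fst X1 + b * snd X1 - 1"
  define u2 v2 w2 where "u2 = dx * fst X2" "v2 = dy * snd X2" "w2 = a * fst X2 + b * snd X2 - 1"
  have a1: "aff u1 v1 w1 = F X1" and a2: "aff u2 v2 w2 = F X2"
    by (simp_all add: F_aff u1_v1_w1_def u2_v2_w2_def)
  obtain p1 q1 where z1: "p1 \<in> L" "q1 \<in> L" "p1 \<noteq> q1" "F X1 p1 = 0" "F X1 q1 = 0"
    using extreme_two[OF e1] by blast
  obtain p2 q2 where z2: "p2 \<in> L" "q2 \<in> L" "p2 \<noteq> q2" "F X2 p2 = 0" "F X2 q2 = 0"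
    using extreme_two[OF e2] by blast
  have same: "\<forall>p\<in>L. (F X1 p \<ge> 0) = (F X2 p \<ge> 0)"
    using pureU_iff[OF K1 pu1] pureU_iff[OF K2 pu2] by blast
  have H: "LH u1 v1 w1 u2 v2 w2 (int N) (int M)"
    unfolding LH_def a1 a2 using same z1 z2 by blast
  obtain pd where pd: "pd \<in> DI" using D by auto
  have "F X1 pd < 0"
  proof -
    have "pd \<in> L" using pd DI_L by blast
    moreover have "pd \<notin> UI" using pd UD_disj by blast
    ultimately show ?thesis using pureU_iff[OF K1 pu1, of pd] by simp
  qed
  then have neg: "\<exists>p\<in>L. aff u1 v1 w1 p < 0" unfolding a1 using DI_L[OF pd] by blast
  have "LC u1 v1 w1 u2 v2 w2 (int N) (int M)" by (rule L_general[OF H neg])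
  then have Z: "\<forall>p\<in>L. (F X1 p = 0) = (F X2 p = 0)" unfolding LC_def a1 a2 .
  show ?thesis by (rule zeros_same_imp_eq[OF e1 Z])
qed

lemma pureD_unique:
  assumes U: "UI \<noteq> {}" and e1: "X1 extreme_point_of K" and e2: "X2 extreme_point_of K"
    and pu1: "\<forall>q\<in>L. F X1 q = 0 \<longrightarrow> q \<in> DI" and pu2: "\<forall>q\<in>L. F X2 q = 0 \<longrightarrow> q \<in> DI"
  shows "X1 = X2"
proof -
  have K1: "X1 \<in> K" and K2: "X2 \<in> K" using e1 e2 by (auto simp: extreme_point_of_def)
  define u1 v1 w1 where "u1 = - (dx * fst X1)" "v1 = - (dy * snd X1)" "w1 = - (a * fst X1 + b * snd X1 - 1)"
  define u2 v2 w2 where "u2 = - (dx * fst X2)" "v2 = - (dy * snd X2)" "w2 = - (a * fst X2 + b * snd X2 - 1)"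
  have a1: "aff u1 v1 w1 = (\<lambda>p. - F X1 p)" and a2: "aff u2 v2 w2 = (\<lambda>p. - F X2 p)"
    by (simp_all add: F_aff u1_v1_w1_def u2_v2_w2_def aff_def fun_eq_iff algebra_simps)
  obtain p1 q1 where z1: "p1 \<in> L" "q1 \<in> L" "p1 \<noteq> q1" "F X1 p1 = 0" "F X1 q1 = 0"
    using extreme_two[OF e1] by blast
  obtain p2 q2 where z2: "p2 \<in> L" "q2 \<in> L" "p2 \<noteq> q2" "F X2 p2 = 0" "F X2 q2 = 0"
    using extreme_two[OF e2] by blast
  have same: "\<forall>p\<in>L. (- F X1 p \<ge> 0) = (- F X2 p \<ge> 0)"
    using pureD_iff[OF K1 pu1] pureD_iff[OF K2 pu2] by blast
  have H: "LH u1 v1 w1 u2 v2 w2 (int N) (int M)"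
    unfolding LH_def a1 a2
  proof (intro conjI)
    show "\<forall>p\<in>L. (0 \<le> - F X1 p) = (0 \<le> - F X2 p)" using same by blast
    show "\<exists>p1 q1. p1 \<in> L \<and> q1 \<in> L \<and> p1 \<noteq> q1 \<and> - F X1 p1 = 0 \<and> - F X1 q1 = 0"
      using z1 by (intro exI[of _ p1] exI[of _ q1]) simp
    show "\<exists>p1 q1. p1 \<in> L \<and> q1 \<in> L \<and> p1 \<noteq> q1 \<and> - F X2 p1 = 0 \<and> - F X2 q1 = 0"
      using z2 by (intro exI[of _ p2] exI[of _ q2]) simp
  qed
  obtain pu where pu: "pu \<in> UI" using U by auto
  have "- F X1 pu < 0"
  proof -
    have "pu \<in> L" using pu UI_L by blast
    moreover have "pu \<notin> DI" using pu UD_disj by blast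
    ultimately show ?thesis using pureD_iff[OF K1 pu1, of pu] by simp
  qed
  then have neg: "\<exists>p\<in>L. aff u1 v1 w1 p < 0" unfolding a1 using UI_L[OF pu] by blast
  have "LC u1 v1 w1 u2 v2 w2 (int N) (int M)" by (rule L_general[OF H neg])
  then have Z: "\<forall>p\<in>L. (F X1 p = 0) = (F X2 p = 0)" unfolding LC_def a1 a2 by simp
  show ?thesis by (rule zeros_same_imp_eq[OF e1 Z])
qed

lemma mixed_normal:
  assumes XK: "X \<in> K" and mx: "mixed X"
  shows "\<exists>n. n \<noteq> 0 \<and> inner n X = 0 \<and> (\<forall>Y\<in>K. inner n Y \<ge> 0)"
proof -
  obtain p q where pq: "p \<in> UI" "q \<in> DI" "F X p = 0" "F X q = 0" using mx by (auto simp: mixed_def)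
  define n where "n = P p - P q"
  have inn: "\<And>Y. inner n Y = F Y p - F Y q" by (simp add: n_def FF_inner inner_diff_left)
  have "n \<noteq> 0"
  proof
    assume "n = 0"
    then have "P p = P q" by (simp add: n_def)
    then have "p = q" by (rule P_inj)
    then show False using pq UD_disj by blast
  qed
  moreover have "inner n X = 0" using pq by (simp add: inn)
  moreover have "\<forall>Y\<in>K. inner n Y \<ge> 0"
    using K_UI K_DI pq by (fastforce simp: inn)
  ultimately show ?thesis by blast
qed

lemma K_nonzero: "UI \<noteq> {} \<Longrightarrow> X \<in> K \<Longrightarrow> X \<noteq> 0"
  using K_UI F_zero_vec by fastforce

lemma mixed_det:
  assumes U: "UI \<noteq> {}" and K1: "X1 \<in> K" and K2: "X2 \<in> K" and m2: "mixed X2" and ne: "X1 \<noteq> X2"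
  shows "fst X1 * snd X2 - snd X1 * fst X2 \<noteq> 0"
proof
  assume d: "fst X1 * snd X2 - snd X1 * fst X2 = 0"
  have "X1 \<noteq> 0" using K_nonzero[OF U K1] .
  then obtain t where t: "X2 = t *\<^sub>R X1" using det_par[OF _ d] by blast
  obtain p q where pq: "p \<in> UI" "q \<in> DI" "F X2 p = 0" "F X2 q = 0" using m2 by (auto simp: mixed_def)
  have ia: "t * inner (P p) X1 = 1" using pq(3) t by (simp add: FF_inner)
  have ib: "t * inner (P q) X1 = 1" using pq(4) t by (simp add: FF_inner)
  have al: "inner (P p) X1 \<ge> 1" using K_UI[OF K1 pq(1)] by (simp add: FF_inner)
  have be: "inner (P q) X1 \<le> 1" using K_DI[OF K1 pq(2)] by (simp add: FF_inner)
  have "t \<noteq> 0" using ia by auto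
  moreover have "t * inner (P p) X1 = t * inner (P q) X1" using ia ib by simp
  ultimately have "inner (P p) X1 = inner (P q) X1" by simp
  then have "inner (P p) X1 = 1" using al be by simp
  then have "t = 1" using ia by simp
  then show False using t ne by simp
qed

lemma mixed_three:
  assumes U: "UI \<noteq> {}"
    and K1: "X1 \<in> K" and K2: "X2 \<in> K" and K3: "X3 \<in> K"
    and m1: "mixed X1" and m2: "mixed X2" and m3: "mixed X3"
    and ne: "X1 \<noteq> X2" "X2 \<noteq> X3" "X1 \<noteq> X3"
  shows False
proof -
  have lam: "\<exists>l. l \<noteq> 0 \<and> (\<forall>Y\<in>K. l * (fst X * snd Y - snd X * fst Y) \<ge> 0)"
    if XK: "X \<in> K" and mx: "mixed X" for X
  proof -
    obtain n where n: "n \<noteq> 0" "inner n X = 0" "\<forall>Y\<in>K. inner n Y \<ge> 0"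
      using mixed_normal[OF XK mx] by blast
    obtain l where l: "l \<noteq> 0" "\<forall>Y. inner n Y = l * (fst X * snd Y - snd X * fst Y)"
      using normal_lambda[OF n(1) K_nonzero[OF U XK] n(2)] by blast
    show ?thesis using n(3) l by (intro exI[of _ l]) auto
  qed
  obtain l1 where l1: "l1 \<noteq> 0" "\<forall>Y\<in>K. l1 * (fst X1 * snd Y - snd X1 * fst Y) \<ge> 0" using lam[OF K1 m1] by blast
  obtain l2 where l2: "l2 \<noteq> 0" "\<forall>Y\<in>K. l2 * (fst X2 * snd Y - snd X2 * fst Y) \<ge> 0" using lam[OF K2 m2] by blast
  obtain l3 where l3: "l3 \<noteq> 0" "\<forall>Y\<in>K. l3 * (fst X3 * snd Y - snd X3 * fst Y) \<ge> 0" using lam[OF K3 m3] by blast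
  define d12 where "d12 = fst X1 * snd X2 - snd X1 * fst X2"
  define d13 where "d13 = fst X1 * snd X3 - snd X1 * fst X3"
  define d23 where "d23 = fst X2 * snd X3 - snd X2 * fst X3"
  have nz: "d12 \<noteq> 0" "d13 \<noteq> 0" "d23 \<noteq> 0"
    using mixed_det[OF U K1 K2 m2 ne(1)] mixed_det[OF U K1 K3 m3 ne(3)] mixed_det[OF U K2 K3 m3 ne(2)]
    by (simp_all add: d12_def d13_def d23_def)
  have s12: "l1 * d12 \<ge> 0" "l2 * (- d12) \<ge> 0"
    using l1(2) K2 l2(2) K1 by (auto simp: d12_def algebra_simps)
  have s13: "l1 * d13 \<ge> 0" "l3 * (- d13) \<ge> 0"
    using l1(2) K3 l3(2) K1 by (auto simp: d13_def algebra_simps)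
  have s23: "l2 * d23 \<ge> 0" "l3 * (- d23) \<ge> 0"
    using l2(2) K3 l3(2) K2 by (auto simp: d23_def algebra_simps)
  have "l1 * l2 < 0" using opp_sign[OF s12 nz(1) l1(1) l2(1)] .
  moreover have "l1 * l3 < 0" using opp_sign[OF s13 nz(2) l1(1) l3(1)] .
  moreover have "l2 * l3 < 0" using opp_sign[OF s23 nz(3) l2(1) l3(1)] .
  ultimately show False by (rule three_neg)
qed

end


lemma card4: "card {w, x, y, z} \<le> 4"
proof -
  have "card {w, x, y, z} \<le> Suc (card {x, y, z})" by (simp add: card_insert_if)
  moreover have "card {x, y, z} \<le> Suc (card {y, z})" by (simp add: card_insert_if)
  moreover have "card {y, z} \<le> Suc (card {z})" by (simp add: card_insert_if)
  ultimately show ?thesis by simp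
qed

context geo begin

lemma count:
  assumes bK: "bounded K"
  shows "finite {X. X extreme_point_of K} \<and> card {X. X extreme_point_of K} \<le> 4"
proof (cases "UI = {}")
  case True
  let ?Q = "{(0, 1 / b), (0, 1 / (b + real M * dy)), (1 / a, 0), (1 / (a + real N * dx), 0)}"
  have sub: "{X. X extreme_point_of K} \<subseteq> ?Q" using polar_pts[OF True] by blast
  have fQ: "finite ?Q" by simp
  have "card ?Q \<le> 4" by (rule card4)
  then show ?thesis using sub fQ card_mono[OF fQ sub] finite_subset[OF sub fQ] by simp
next
  case False
  have D: "DI \<noteq> {}" using DI_ne[OF False bK] .
  define E where "E = {X. X extreme_point_of K}"
  define EU where "EU = {X\<in>E. \<forall>q\<in>L. F X q = 0 \<longrightarrow> q \<in> UI}"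
  define ED where "ED = {X\<in>E. \<forall>q\<in>L. F X q = 0 \<longrightarrow> q \<in> DI}"
  define EM where "EM = {X\<in>E. mixed X}"
  have EK: "\<And>X. X \<in> E \<Longrightarrow> X \<in> K" by (simp add: E_def extreme_point_of_def)
  have sub: "E \<subseteq> EU \<union> ED \<union> EM"
  proof
    fix X assume XE: "X \<in> E"
    show "X \<in> EU \<union> ED \<union> EM"
    proof (cases "X \<in> EU \<or> X \<in> ED")
      case True then show ?thesis by blast
    next
      case False
      then obtain q where q: "q \<in> L" "F X q = 0" "q \<notin> UI" using XE by (auto simp: EU_def)
      obtain p where p: "p \<in> L" "F X p = 0" "p \<notin> DI" using XE False by (auto simp: ED_def)
      have "q \<in> DI" using q L_UD by blast
      moreover have "p \<in> UI" using p L_UD by blast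
      ultimately have "mixed X" using p q by (auto simp: mixed_def)
      then show ?thesis using XE by (simp add: EM_def)
    qed
  qed
  have cU: "finite EU \<and> card EU \<le> 1"
  proof (rule card_le1, intro ballI)
    fix x y assume xy: "x \<in> EU" "y \<in> EU"
    have "x extreme_point_of K" "y extreme_point_of K" "\<forall>q\<in>L. F x q = 0 \<longrightarrow> q \<in> UI"
      "\<forall>q\<in>L. F y q = 0 \<longrightarrow> q \<in> UI"
      using xy by (simp_all add: EU_def E_def)
    then show "x = y" by (rule pureU_unique[OF D])
  qed
  have cD: "finite ED \<and> card ED \<le> 1"
  proof (rule card_le1, intro ballI)
    fix x y assume xy: "x \<in> ED" "y \<in> ED"
    have "x extreme_point_of K" "y extreme_point_of K" "\<forall>q\<in>L. F x q = 0 \<longrightarrow> q \<in> DI"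
      "\<forall>q\<in>L. F y q = 0 \<longrightarrow> q \<in> DI"
      using xy by (simp_all add: ED_def E_def)
    then show "x = y" by (rule pureD_unique[OF False])
  qed
  have cM: "finite EM \<and> card EM \<le> 2"
  proof (rule card_le2, intro ballI)
    fix x y z assume "x \<in> EM" "y \<in> EM" "z \<in> EM"
    then have "x \<in> K" "y \<in> K" "z \<in> K" "mixed x" "mixed y" "mixed z" using EK by (auto simp: EM_def)
    then show "x = y \<or> y = z \<or> x = z" using mixed_three[OF False] by blast
  qed
  have fin: "finite (EU \<union> ED \<union> EM)" using cU cD cM by simp
  have "card (EU \<union> ED \<union> EM) \<le> card (EU \<union> ED) + card EM" by (rule card_Un_le)
  also have "\<dots> \<le> card EU + card ED + card EM" using card_Un_le[of EU ED] by simp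
  also have "\<dots> \<le> 4" using cU cD cM by simp
  finally have "card (EU \<union> ED \<union> EM) \<le> 4" .
  then have "finite E \<and> card E \<le> 4" using fin sub card_mono[OF fin sub] finite_subset[OF sub fin] by simp
  then show ?thesis by (simp add: E_def)
qed

lemma K_compact: "bounded K \<Longrightarrow> compact K"
  using K_closed by (simp add: compact_eq_bounded_closed)

lemma K_hull:
  assumes "bounded K"
  shows "\<exists>V. finite V \<and> card V \<le> 4 \<and> K = convex hull V"
  using Krein_Milman_Minkowski[OF K_compact[OF assms] K_convex] count[OF assms] by blast

end


lemma line_mem: "X \<in> line_of P \<longleftrightarrow> fst P * fst X + snd P * snd X = 1"
  by (cases X) (simp add: line_of_def)

lemma FF_coord: "FF a b dx dy X p = fst (Pt a b dx dy p) * fst X + snd (Pt a b dx dy p) * snd X - 1"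
  by (simp add: FF_inner inner_prod_def)

lemma Z_char:
  "UNIV - \<Union>(line_of ` rect_lattice_set a b dx dy N M) = {X. \<forall>p\<in>ibox (int N) (int M). FF a b dx dy X p \<noteq> 0}"
proof (intro set_eqI iffI)
  fix X assume X: "X \<in> UNIV - \<Union>(line_of ` rect_lattice_set a b dx dy N M)"
  show "X \<in> {X. \<forall>p\<in>ibox (int N) (int M). FF a b dx dy X p \<noteq> 0}"
  proof (intro CollectI ballI)
    fix p assume pL: "p \<in> ibox (int N) (int M)"
    obtain k j where p: "p = (k, j)" by (cases p)
    show "FF a b dx dy X p \<noteq> 0"
    proof (cases "Pt a b dx dy p = (0, 0)")
      case True
      then show ?thesis by (simp add: FF_coord)
    next
      case False
      have "k \<ge> 0" "j \<ge> 0" "nat k \<le> N" "nat j \<le> M" using pL by (auto simp: p mem_ibox)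
      then have "Pt a b dx dy p = (a + real (nat k) * dx, b + real (nat j) * dy)"
        by (simp add: Pt_def p)
      then have "Pt a b dx dy p \<in> rect_lattice_set a b dx dy N M"
        using False \<open>nat k \<le> N\<close> \<open>nat j \<le> M\<close> unfolding rect_lattice_set_def by blast
      then have "X \<notin> line_of (Pt a b dx dy p)" using X by blast
      then show ?thesis by (simp add: line_mem FF_coord)
    qed
  qed
next
  fix X assume X: "X \<in> {X. \<forall>p\<in>ibox (int N) (int M). FF a b dx dy X p \<noteq> 0}"
  show "X \<in> UNIV - \<Union>(line_of ` rect_lattice_set a b dx dy N M)"
  proof (clarsimp)
    fix P assume P: "P \<in> rect_lattice_set a b dx dy N M" and XP: "X \<in> line_of P"
    obtain k j where kj: "P = (a + real k * dx, b + real j * dy)" "k \<le> N" "j \<le> M"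
      using P unfolding rect_lattice_set_def by blast
    have pL: "(int k, int j) \<in> ibox (int N) (int M)" using kj by (simp add: mem_ibox)
    have "Pt a b dx dy (int k, int j) = P" by (simp add: Pt_def kj)
    then have "FF a b dx dy X (int k, int j) = 0" using XP by (simp add: FF_coord line_mem)
    then show False using X pL by blast
  qed
qed

theorem theorem4p3:
  fixes S :: "(real \<times> real) set" and R :: "(real \<times> real) set"
  assumes "is_rectangular_lattice S"
    and "R \<in> regions S"
    and "bounded R"
  shows "\<exists>V. finite V \<and> card V \<le> 4 \<and> R = convex hull V"
proof -
  obtain a b dx dy N M where dxp: "dx > 0" and dyp: "dy > 0"
    and S: "S = rect_lattice_set a b dx dy N M"
    using assms(1) unfolding is_rectangular_lattice_def by blast
  define Z where "Z = UNIV - \<Union>(line_of ` S)"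
  obtain C where C: "C \<in> components Z" "R = closure C"
    using assms(2) unfolding regions_def Z_def by blast
  have Zc: "Z = {X. \<forall>p\<in>ibox (int N) (int M). FF a b dx dy X p \<noteq> 0}"
    unfolding Z_def S by (rule Z_char)
  obtain X0 where X0C: "X0 \<in> C" using in_components_nonempty[OF C(1)] by blast
  have CZ: "C \<subseteq> Z" by (rule in_components_subset[OF C(1)])
  then have X0Z: "X0 \<in> Z" using X0C by blast
  have nz: "\<forall>p\<in>ibox (int N) (int M). FF a b dx dy X0 p \<noteq> 0" using X0Z Zc by blast
  interpret g: geo a b dx dy N M X0
    by unfold_locales (use dxp dyp nz in auto)
  have Ccc: "C = connected_component_set Z X0"
  proof -
    obtain x where x: "x \<in> Z" "C = connected_component_set Z x" using C(1) components_iff by blast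
    then have "connected_component_set Z X0 = connected_component_set Z x"
      using X0C connected_component_eq by blast
    then show ?thesis using x by simp
  qed
  have Cconn: "connected C" by (rule in_components_connected[OF C(1)])
  have CK: "C \<subseteq> g.K"
  proof
    fix W assume WC: "W \<in> C"
    show "W \<in> g.K" unfolding g.K_def
    proof (intro CollectI ballI conjI impI)
      fix p assume pL: "p \<in> ibox (int N) (int M)"
      {
        assume pos: "FF a b dx dy X0 p > 0"
        show "FF a b dx dy W p \<ge> 0"
        proof (rule ccontr)
          assume "\<not> FF a b dx dy W p \<ge> 0"
          then have "inner (Pt a b dx dy p) W \<le> 1" "1 \<le> inner (Pt a b dx dy p) X0"
            using pos by (simp_all add: FF_inner)
          then obtain z where z: "z \<in> C" "inner (Pt a b dx dy p) z = 1"
            using connected_ivt_hyperplane[OF Cconn WC X0C] by blast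
          then have "FF a b dx dy z p = 0" by (simp add: FF_inner)
          moreover have "z \<in> Z" using z CZ by blast
          ultimately show False using Zc pL by blast
        qed
      }
      {
        assume neg: "FF a b dx dy X0 p < 0"
        show "FF a b dx dy W p \<le> 0"
        proof (rule ccontr)
          assume "\<not> FF a b dx dy W p \<le> 0"
          then have "inner (Pt a b dx dy p) X0 \<le> 1" "1 \<le> inner (Pt a b dx dy p) W"
            using neg by (simp_all add: FF_inner)
          then obtain z where z: "z \<in> C" "inner (Pt a b dx dy p) z = 1"
            using connected_ivt_hyperplane[OF Cconn X0C WC] by blast
          then have "FF a b dx dy z p = 0" by (simp add: FF_inner)
          moreover have "z \<in> Z" using z CZ by blast
          ultimately show False using Zc pL by blast
        qed
      }
    qed
  qed
  have KC: "g.K \<subseteq> closure C"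
  proof
    fix Y assume YK: "Y \<in> g.K"
    have strict: "0 < sgn (FF a b dx dy X0 p) * FF a b dx dy (Y + t *\<^sub>R (X0 - Y)) p"
      if t: "0 < t" "t \<le> 1" and pL: "p \<in> ibox (int N) (int M)" for t p
    proof -
      have s0: "0 < sgn (FF a b dx dy X0 p) * FF a b dx dy X0 p"
        using nz pL by (auto simp: sgn_if mult_less_0_iff)
      have sY: "0 \<le> sgn (FF a b dx dy X0 p) * FF a b dx dy Y p"
        using YK pL unfolding g.K_eq by blast
      have "sgn (FF a b dx dy X0 p) * FF a b dx dy (Y + t *\<^sub>R (X0 - Y)) p
          = (1 - t) * (sgn (FF a b dx dy X0 p) * FF a b dx dy Y p) + t * (sgn (FF a b dx dy X0 p) * FF a b dx dy X0 p)"
        unfolding FF_comb by (simp add: algebra_simps)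
      moreover have "(1 - t) * (sgn (FF a b dx dy X0 p) * FF a b dx dy Y p) \<ge> 0" using t sY by simp
      moreover have "t * (sgn (FF a b dx dy X0 p) * FF a b dx dy X0 p) > 0" using t s0 by simp
      ultimately show ?thesis by linarith
    qed
    have inC: "Y + t *\<^sub>R (X0 - Y) \<in> C" if t: "0 < t" "t \<le> 1" for t
    proof -
      have segZ: "closed_segment X0 (Y + t *\<^sub>R (X0 - Y)) \<subseteq> Z"
      proof
        fix W assume "W \<in> closed_segment X0 (Y + t *\<^sub>R (X0 - Y))"
        then obtain m where m: "0 \<le> m" "m \<le> 1" "W = (1 - m) *\<^sub>R X0 + m *\<^sub>R (Y + t *\<^sub>R (X0 - Y))"
          unfolding closed_segment_def by blast
        define s where "s = 1 - m + m * t"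
        have s: "0 < s" "s \<le> 1"
        proof -
          show "0 < s"
          proof (cases "m = 1")
            case True then show ?thesis using t by (simp add: s_def)
          next
            case False then have "1 - m > 0" using m by simp
            then show ?thesis using m t by (simp add: s_def add_pos_nonneg)
          qed
          show "s \<le> 1" using m t by (simp add: s_def mult_left_le)
        qed
        have "W = Y + s *\<^sub>R (X0 - Y)" using m(3)
          by (simp add: s_def algebra_simps)
        then have "\<forall>p\<in>ibox (int N) (int M). FF a b dx dy W p \<noteq> 0"
          using strict[OF s] by (metis mult_zero_right order_less_irrefl)
        then show "W \<in> Z" using Zc by blast
      qed
      have "closed_segment X0 (Y + t *\<^sub>R (X0 - Y)) \<subseteq> connected_component_set Z X0"
        by (rule connected_component_maximal) (use segZ in auto)
      then show ?thesis using Ccc by auto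
    qed
    show "Y \<in> closure C"
      unfolding closure_approachable
    proof (intro allI impI)
      fix e :: real assume e: "e > 0"
      define nn where "nn = norm (X0 - Y)"
      have nn0: "nn \<ge> 0" by (simp add: nn_def)
      define t where "t = min 1 (e / (2 * (nn + 1)))"
      have d0: "2 * (nn + 1) > 0" using nn0 by simp
      then have "e / (2 * (nn + 1)) > 0" using e by simp
      then have t: "0 < t" "t \<le> 1" by (auto simp: t_def)
      have "dist (Y + t *\<^sub>R (X0 - Y)) Y = t * nn" using t by (simp add: dist_norm nn_def)
      also have "\<dots> \<le> (e / (2 * (nn + 1))) * nn"
        using nn0 by (intro mult_right_mono) (auto simp: t_def)
      also have "\<dots> < e"
      proof -
        have "nn < 2 * (nn + 1)" using nn0 by (simp add: algebra_simps)
        then have "nn / (2 * (nn + 1)) < 1" using d0 by (simp add: divide_less_eq)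
        then have "e * (nn / (2 * (nn + 1))) < e * 1" using e by (intro mult_strict_left_mono) auto
        then show ?thesis by (simp add: field_simps)
      qed
      finally show "\<exists>y\<in>C. dist y Y < e" using inC[OF t] by blast
    qed
  qed
  have RK: "R = g.K"
  proof
    show "R \<subseteq> g.K" unfolding C(2) by (rule closure_minimal[OF CK g.K_closed])
    show "g.K \<subseteq> R" unfolding C(2) by (rule KC)
  qed
  have "bounded g.K" using assms(3) RK by simp
  then show ?thesis using g.K_hull RK by simp
qed


end
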